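(* Let $\alpha\in(0,1]$, $c>0$, $a>0$, $t>0$. Then $$\frac{N_t^{\alpha,c,a}[0,L]-L/a}{\sqrt{V_t^{\alpha,c,a}[L]}}$$ converges in distribution to a standard normal random variable as $L\to\infty$.
   Context: A symmetric $\alpha$-stable process with parameters $\alpha$, $c>0$ is a Lévy process $(X(t))_{t\ge0}$ on $\mathbb{R}$ with $X(0)=0$ and $\mathbb{E}[e^{i\theta X(t)}]=\exp(-tc|\theta|^\alpha)$. Let $(X_j)_{j\in\mathbb{Z}}$ be independent copies, $\epsilon\sim\mathrm{Uniform}[0,1]$ independent of them, and $u_j=a(j-\epsilon)$. Define $N_t^{\alpha,c,a}[0,L]=\sum_{j\in\mathbb{Z}}\mathbb{I}[X_j(t)+u_j\in[0,L]]$ and the number variance $V_t^{\alpha,c,a}[L]=\mathrm{Var}(N_t^{\alpha,c,a}[0,L])$. *)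

theory Defs
  imports "HOL-Probability.Probability"
begin

definition sym_stable_levy :: "'a measure \<Rightarrow> (real \<Rightarrow> 'a \<Rightarrow> real) \<Rightarrow> real \<Rightarrow> real \<Rightarrow> bool" where
  "sym_stable_levy M X \<alpha> c \<longleftrightarrow>
     prob_space M \<and>
     (\<forall>s. X s \<in> borel_measurable M) \<and>
     (\<forall>\<omega>\<in>space M. X 0 \<omega> = 0) \<and>
     (\<forall>(\<tau>::nat \<Rightarrow> real) n. (\<forall>k<n. 0 \<le> \<tau> k \<and> \<tau> k \<le> \<tau> (Suc k)) \<longrightarrow>
         prob_space.indep_vars M (\<lambda>_. borel) (\<lambda>k \<omega>. X (\<tau> (Suc k)) \<omega> - X (\<tau> k) \<omega>) {..<n}) \<and>
     (\<forall>s h. 0 \<le> s \<longrightarrow> 0 \<le> h \<longrightarrow>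
         distr M borel (\<lambda>\<omega>. X (s + h) \<omega> - X s \<omega>) = distr M borel (X h)) \<and>
     (\<forall>s\<ge>0. \<forall>\<theta>. char (distr M borel (X s)) \<theta> = complex_of_real (exp (- (s * c * \<bar>\<theta>\<bar> powr \<alpha>))))"

text \<open>N_t[0,L] = sum over j of the indicator of X_j(t) + a(j - eps) in [0,L]
(a.s. finitely many terms; rendered as the cardinality of the set of such j).\<close>
definition count_N :: "(int \<Rightarrow> real \<Rightarrow> 'a \<Rightarrow> real) \<Rightarrow> ('a \<Rightarrow> real) \<Rightarrow> real \<Rightarrow> real \<Rightarrow> real \<Rightarrow> 'a \<Rightarrow> real" where
  "count_N X \<epsilon> a t L \<omega> = real (card {j::int. X j t \<omega> + a * (real_of_int j - \<epsilon> \<omega>) \<in> {0..L}})"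

definition number_variance :: "'a measure \<Rightarrow> (int \<Rightarrow> real \<Rightarrow> 'a \<Rightarrow> real) \<Rightarrow> ('a \<Rightarrow> real) \<Rightarrow> real \<Rightarrow> real \<Rightarrow> real \<Rightarrow> real" where
  "number_variance M X \<epsilon> a t L =
     (LINT \<omega>|M. (count_N X \<epsilon> a t L \<omega> - (LINT \<omega>'|M. count_N X \<epsilon> a t L \<omega>'))\<^sup>2)"

end

theory Submission
  imports Defs
begin

lemma lattice_set_eq:
  fixes a lo hi :: real assumes "a > 0"
  shows "{j::int. lo \<le> a * j \<and> a * j \<le> hi} = {\<lceil>lo / a\<rceil>..\<lfloor>hi / a\<rfloor>}"
proof -
  have "lo \<le> a * j \<longleftrightarrow> lo / a \<le> j" for j :: int using assms by (simp add: field_simps)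
  moreover have "a * j \<le> hi \<longleftrightarrow> j \<le> hi / a" for j :: int using assms by (simp add: field_simps)
  ultimately show ?thesis by (auto simp: ceiling_le_iff le_floor_iff)
qed

lemma lattice_card:
  fixes a lo hi :: real assumes "a > 0"
  shows "finite {j::int. lo \<le> a * j \<and> a * j \<le> hi}"
    and "real (card {j::int. lo \<le> a * j \<and> a * j \<le> hi}) \<le> max 0 ((hi - lo) / a) + 1"
    and "real (card {j::int. lo \<le> a * j \<and> a * j \<le> hi}) \<ge> (hi - lo) / a - 1"
proof -
  let ?S = "{j::int. lo \<le> a * j \<and> a * j \<le> hi}"
  have eq: "?S = {\<lceil>lo / a\<rceil>..\<lfloor>hi / a\<rfloor>}" by (rule lattice_set_eq[OF assms])
  show "finite ?S" unfolding eq by simp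
  have c: "real (card ?S) = real (nat (\<lfloor>hi / a\<rfloor> - \<lceil>lo / a\<rceil> + 1))" unfolding eq by simp
  have f1: "real_of_int \<lfloor>hi / a\<rfloor> \<le> hi / a" "hi / a - 1 < real_of_int \<lfloor>hi / a\<rfloor>" by linarith+
  have f2: "lo / a \<le> real_of_int \<lceil>lo / a\<rceil>" "real_of_int \<lceil>lo / a\<rceil> < lo / a + 1" by linarith+
  have d: "(hi - lo) / a = hi / a - lo / a" by (simp add: diff_divide_distrib)
  show "real (card ?S) \<le> max 0 ((hi - lo) / a) + 1"
  proof (cases "\<lfloor>hi / a\<rfloor> - \<lceil>lo / a\<rceil> + 1 \<ge> 0")
    case True
    then have "real (card ?S) = real_of_int \<lfloor>hi / a\<rfloor> - real_of_int \<lceil>lo / a\<rceil> + 1"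
      unfolding c by (simp add: of_nat_nat)
    then show ?thesis unfolding d using f1 f2 by linarith
  next
    case False then show ?thesis unfolding c d by simp
  qed
  show "real (card ?S) \<ge> (hi - lo) / a - 1"
  proof (cases "\<lfloor>hi / a\<rfloor> - \<lceil>lo / a\<rceil> + 1 \<ge> 0")
    case True
    then have "real (card ?S) = real_of_int \<lfloor>hi / a\<rfloor> - real_of_int \<lceil>lo / a\<rceil> + 1"
      unfolding c by (simp add: of_nat_nat)
    then show ?thesis unfolding d using f1 f2 by linarith
  next
    case False
    then have "real (card ?S) = 0" unfolding c by simp
    then show ?thesis unfolding d using f1 f2 False by linarith
  qed
qed

lemma exp_neg_le_quad:
  fixes w :: real assumes "0 \<le> w"
  shows "exp (- w) \<le> 1 - w + w^2 / 2"
proof -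
  let ?f = "\<lambda>x::real. 1 - x + x^2/2 - exp (- x)"
  have "?f 0 \<le> ?f w"
  proof (rule DERIV_nonneg_imp_increasing_open[OF assms])
    fix x :: real assume "0 < x" "x < w"
    have "DERIV ?f x :> (- 1 + x + exp (- x))"
      by (auto intro!: derivative_eq_intros)
    moreover have "- 1 + x + exp (- x) \<ge> 0" using exp_ge_add_one_self[of "-x"] by linarith
    ultimately show "\<exists>y. DERIV ?f x :> y \<and> 0 \<le> y" by blast
  next
    show "continuous_on {0..w} ?f" by (intro continuous_intros) auto
  qed
  then show ?thesis by simp
qed

lemma exp_neg_approx:
  fixes w :: real assumes "0 \<le> w"
  shows "\<bar>exp (- w) - (1 - w)\<bar> \<le> w^2 / 2"
  using exp_neg_le_quad[OF assms] exp_ge_add_one_self[of "-w"] assms by (simp add: abs_if)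

lemma iexp_taylor2:
  "cmod (iexp x - (1 + \<i> * x - x^2 / 2)) \<le> \<bar>x\<bar>^3 / 6"
proof -
  have "cmod (iexp x - (\<Sum>k \<le> 2. (\<i> * x)^k / fact k)) \<le> \<bar>x\<bar>^(Suc 2) / fact (Suc 2)"
    by (rule iexp_approx1)
  moreover have "(\<Sum>k \<le> 2. (\<i> * x)^k / fact k) = 1 + \<i> * x - x^2 / 2"
    by (simp add: numeral_2_eq_2 power2_eq_square mult.assoc mult.left_commute complex_i_mult_minus)
  moreover have "(fact (Suc 2) :: real) = 6" by (simp add: numeral_3_eq_3 numeral_2_eq_2)
  ultimately show ?thesis by (simp add: numeral_3_eq_3)
qed

lemma iexp_diff_le: "cmod (iexp x - iexp y) \<le> \<bar>x - y\<bar>"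
proof -
  have "cmod (iexp (x - y) - (\<Sum>k \<le> 0. (\<i> * (x-y))^k / fact k)) \<le> \<bar>x - y\<bar>^(Suc 0) / fact (Suc 0)"
    by (rule iexp_approx1)
  then have "cmod (iexp (x - y) - 1) \<le> \<bar>x - y\<bar>" by simp
  moreover have "iexp x - iexp y = iexp y * (iexp (x - y) - 1)"
    by (simp add: algebra_simps flip: exp_add)
  moreover have "cmod (iexp y) = 1" by simp
  ultimately show ?thesis by (simp add: norm_mult)
qed

lemma bern_factor_bound:
  fixes p u :: real
  assumes p: "0 \<le> p" "p \<le> 1" and u: "\<bar>u\<bar> \<le> 1"
  shows "cmod ((1 + p * (iexp u - 1)) * iexp (- (u * p)) - exp (- (u^2 * (p * (1 - p)) / 2)))
           \<le> \<bar>u\<bar>^3 * (p * (1 - p))"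
proof -
  define x1 where "x1 = - (u * p)"
  define x2 where "x2 = u * (1 - p)"
  define R1 where "R1 = iexp x1 - (1 + \<i> * x1 - x1^2 / 2)"
  define R2 where "R2 = iexp x2 - (1 + \<i> * x2 - x2^2 / 2)"
  define v where "v = p * (1 - p)"
  have v0: "0 \<le> v" unfolding v_def using p by simp
  have h2: "0 \<le> (2*p-1)^2" by simp
  have h4: "p*(1-p) = 1/4 - (2*p-1)^2/4" by (simp add: power2_eq_square field_simps)
  have v1: "v \<le> 1/4" unfolding v_def h4 using h2 by linarith
  have e0: "iexp u * iexp (-(u*p)) = iexp (u*(1-p))"
    by (simp flip: exp_add add: algebra_simps)
  have e00: "(1 + p * (iexp u - 1)) * iexp (- (u * p)) = (1 - p) * iexp (- (u * p)) + p * (iexp u * iexp (- (u * p)))"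
    by (simp add: algebra_simps)
  have eq1: "(1 + p * (iexp u - 1)) * iexp (- (u * p)) = (1 - p) * iexp x1 + p * iexp x2"
    unfolding e00 e0 x1_def x2_def ..
  have eq2: "(1 - p) * iexp x1 + p * iexp x2 = 1 - u^2 * v / 2 + ((1 - p) * R1 + p * R2)"
    unfolding R1_def R2_def x1_def x2_def v_def
    by (simp add: field_simps power2_eq_square)
  have a1: "\<bar>x1\<bar>^3 = \<bar>u\<bar>^3 * p^3" by (simp add: x1_def abs_mult power_mult_distrib p)
  have a2: "\<bar>x2\<bar>^3 = \<bar>u\<bar>^3 * (1-p)^3" by (simp add: x2_def abs_mult power_mult_distrib p)
  have nR1: "cmod R1 \<le> \<bar>u\<bar>^3 * p^3 / 6" unfolding R1_def using iexp_taylor2[of x1] a1 by simp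
  have nR2: "cmod R2 \<le> \<bar>u\<bar>^3 * (1-p)^3 / 6" unfolding R2_def using iexp_taylor2[of x2] a2 by simp
  have n1: "cmod (1 - complex_of_real p) = 1 - p" using p
    by (metis abs_of_nonneg diff_ge_0_iff_ge norm_of_real of_real_1 of_real_diff)
  have "cmod ((1 - p) * R1 + p * R2) \<le> cmod ((1 - p) * R1) + cmod (p * R2)"
    by (rule norm_triangle_ineq)
  also have "\<dots> = (1 - p) * cmod R1 + p * cmod R2" using p n1 by (simp add: norm_mult)
  also have "\<dots> \<le> (1 - p) * (\<bar>u\<bar>^3 * p^3 / 6) + p * (\<bar>u\<bar>^3 * (1-p)^3 / 6)"
    using p nR1 nR2 by (intro add_mono mult_left_mono) auto
  also have "\<dots> = \<bar>u\<bar>^3 * v * (p^2 + (1-p)^2) / 6"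
  proof -
    have e1: "(1-p)*p^3 + p*(1-p)^3 = (p*(1-p))*(p^2+(1-p)^2)"
      by (simp add: power2_eq_square power3_eq_cube algebra_simps)
    have "\<And>k::real. (1-p)*(k*p^3/6) + p*(k*(1-p)^3/6) = k*((1-p)*p^3 + p*(1-p)^3)/6"
      by (simp add: algebra_simps add_divide_distrib diff_divide_distrib)
    then have "\<And>k::real. (1-p)*(k*p^3/6) + p*(k*(1-p)^3/6) = k*(p*(1-p))*(p^2+(1-p)^2)/6"
      unfolding e1 by (simp add: mult.assoc)
    then show ?thesis unfolding v_def .
  qed
  also have "\<dots> \<le> \<bar>u\<bar>^3 * v / 6"
  proof -
    have "p^2 + (1-p)^2 = 1 - 2 * v" unfolding v_def by (simp add: power2_eq_square algebra_simps)
    then have "p^2 + (1-p)^2 \<le> 1" using v0 by linarith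
    then show ?thesis using v0 by (simp add: mult_left_le)
  qed
  finally have A: "cmod ((1 - p) * R1 + p * R2) \<le> \<bar>u\<bar>^3 * v / 6" .
  define w where "w = u^2 * v / 2"
  have w0: "0 \<le> w" unfolding w_def using v0 by simp
  have B: "\<bar>exp (- w) - (1 - w)\<bar> \<le> w^2 / 2" by (rule exp_neg_approx[OF w0])
  have "w^2 / 2 = u^2 * u^2 * (v * v) / 8" unfolding w_def by (simp add: power2_eq_square)
  also have "\<dots> \<le> \<bar>u\<bar>^3 * (v / 4) / 8"
  proof -
    have "u^2 * u^2 = u^4" by simp
    also have "\<dots> = \<bar>u\<bar>^4" by simp
    also have "\<dots> = \<bar>u\<bar> * \<bar>u\<bar>^3" by (simp add: power_Suc[symmetric] del: power_Suc)
    also have "\<dots> \<le> \<bar>u\<bar>^3" using u by (simp add: mult_left_le_one_le)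
    finally have uu: "u^2 * u^2 \<le> \<bar>u\<bar>^3" .
    have vv: "v * v \<le> v / 4" using mult_left_mono[OF v1 v0] by simp
    have "u^2 * u^2 * (v * v) \<le> \<bar>u\<bar>^3 * (v / 4)"
      using uu vv v0 by (intro mult_mono) auto
    then show ?thesis by (simp add: mult.commute mult.left_commute)
  qed
  finally have B': "\<bar>exp (- w) - (1 - w)\<bar> \<le> \<bar>u\<bar>^3 * v / 32" using B by simp
  have eq3: "(1 + p * (iexp u - 1)) * iexp (- (u * p)) - exp (- (u^2 * (p * (1 - p)) / 2))
      = ((1 - p) * R1 + p * R2) - complex_of_real (exp (- w) - (1 - w))"
    unfolding eq1 eq2 by (simp add: w_def v_def algebra_simps)
  have "cmod (((1 - p) * R1 + p * R2) - complex_of_real (exp (- w) - (1 - w)))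
      \<le> cmod ((1 - p) * R1 + p * R2) + \<bar>exp (- w) - (1 - w)\<bar>"
    by (metis norm_of_real norm_triangle_ineq4)
  also have "\<dots> \<le> \<bar>u\<bar>^3 * v / 6 + \<bar>u\<bar>^3 * v / 32" using A B' by linarith
  also have "\<dots> \<le> \<bar>u\<bar>^3 * v" using v0 by (simp add: field_simps)
  finally show ?thesis unfolding eq3 v_def .
qed

locale stbl =
  fixes M :: "'a measure" and X :: "int \<Rightarrow> real \<Rightarrow> 'a \<Rightarrow> real" and \<epsilon> :: "'a \<Rightarrow> real"
    and \<alpha> c a t :: real
  assumes M: "prob_space M"
    and \<alpha>0: "0 < \<alpha>" and \<alpha>1: "\<alpha> \<le> 1" and c0: "0 < c" and a0: "0 < a" and t0: "0 < t"
    and lev: "\<And>j. sym_stable_levy M (X j) \<alpha> c"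
    and \<epsilon>m: "\<epsilon> \<in> borel_measurable M"
    and indep0: "prob_space.indep_vars M (\<lambda>_. Pi\<^sub>M UNIV (\<lambda>_::real. borel))
           (\<lambda>i \<omega>. case i of None \<Rightarrow> (\<lambda>s. \<epsilon> \<omega>) | Some j \<Rightarrow> (\<lambda>s. X j s \<omega>)) (UNIV :: int option set)"
begin

sublocale prob_space M by (rule M)

lemma Xm[measurable]: "X j s \<in> borel_measurable M"
  using lev[of j] unfolding sym_stable_levy_def by blast

declare \<epsilon>m[measurable]

definition Y :: "int option \<Rightarrow> 'a \<Rightarrow> real" where
  "Y i \<omega> = (case i of None \<Rightarrow> \<epsilon> \<omega> | Some j \<Rightarrow> X j t \<omega>)"

lemma Y_eq: "Y i = (case i of None \<Rightarrow> \<epsilon> | Some j \<Rightarrow> X j t)"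
  by (auto simp: Y_def fun_eq_iff split: option.split)

lemma Ym[measurable]: "Y i \<in> borel_measurable M"
  unfolding Y_eq by (cases i) auto

lemma indep_Y: "indep_vars (\<lambda>_. borel) Y UNIV"
proof -
  have "indep_vars (\<lambda>_. borel) (\<lambda>i x. (\<lambda>f. f t) ((case i of None \<Rightarrow> (\<lambda>s. \<epsilon> x) | Some j \<Rightarrow> (\<lambda>s. X j s x)))) UNIV"
    by (rule indep_vars_compose2[OF indep0]) simp
  then show ?thesis
    by (rule indep_vars_cong[THEN iffD1, rotated 3]) (auto simp: Y_def fun_eq_iff split: option.splits)
qed

definition \<mu> :: "real measure" where "\<mu> = distr M borel (X 0 t)"

lemma char_Xj: "char (distr M borel (X j t)) \<theta> = complex_of_real (exp (- (t * c * \<bar>\<theta>\<bar> powr \<alpha>)))"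
  using lev[of j] t0 unfolding sym_stable_levy_def by auto

lemma distr_Xj: "distr M borel (X j t) = \<mu>"
  unfolding \<mu>_def by (rule Levy_uniqueness) (auto simp: fun_eq_iff char_Xj)

lemma real_distribution_\<mu>: "real_distribution \<mu>"
  unfolding \<mu>_def by simp

sublocale mu: real_distribution \<mu> by (rule real_distribution_\<mu>)

lemma char_\<mu>: "char \<mu> \<theta> = complex_of_real (exp (- (t * c * \<bar>\<theta>\<bar> powr \<alpha>)))"
  using char_Xj[of 0 \<theta>] unfolding \<mu>_def .

lemma sets_\<mu>[simp, measurable_cong]: "sets \<mu> = sets borel" by (simp add: \<mu>_def)
lemma space_\<mu>[simp]: "space \<mu> = UNIV" by (simp add: \<mu>_def)

lemma integral_Xj:
  fixes g :: "real \<Rightarrow> 'b::{banach, second_countable_topology}"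
  assumes [measurable]: "g \<in> borel_measurable borel"
  shows "integral\<^sup>L M (\<lambda>\<omega>. g (X j t \<omega>)) = integral\<^sup>L \<mu> g"
  by (subst distr_Xj[of j, symmetric]) (simp add: integral_distr)

lemma indep_prod:
  fixes g :: "int \<Rightarrow> real \<Rightarrow> 'b::{real_normed_field, banach, second_countable_topology}"
  assumes T: "finite T" and gm[measurable]: "\<And>j. g j \<in> borel_measurable borel"
    and gb: "\<And>j x. norm (g j x) \<le> B"
  shows "integral\<^sup>L M (\<lambda>\<omega>. \<Prod>j\<in>T. g j (X j t \<omega>)) = (\<Prod>j\<in>T. integral\<^sup>L \<mu> (g j))"
proof -
  define gg where "gg i = (case i of Some j \<Rightarrow> g j | None \<Rightarrow> (\<lambda>_. 1))" for i
  have ggm[measurable]: "gg i \<in> borel_measurable borel" for i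
    by (cases i) (auto simp: gg_def)
  have ind: "indep_vars (\<lambda>_. borel) (\<lambda>i \<omega>. gg i (Y i \<omega>)) (Some ` T)"
    by (rule indep_vars_compose2[OF indep_vars_subset[OF indep_Y]]) auto
  have int: "integrable M (\<lambda>\<omega>. gg i (Y i \<omega>))" for i
  proof (rule integrable_const_bound[where B="max 1 B"])
    show "AE x in M. norm (gg i (Y i x)) \<le> max 1 B"
      using gb by (cases i) (auto simp: gg_def intro: le_max_iff_disj[THEN iffD2])
  qed simp
  have "integral\<^sup>L M (\<lambda>\<omega>. \<Prod>i\<in>Some ` T. gg i (Y i \<omega>)) = (\<Prod>i\<in>Some ` T. integral\<^sup>L M (\<lambda>\<omega>. gg i (Y i \<omega>)))"
    using ind int T by (intro indep_vars_lebesgue_integral) auto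
  moreover have "(\<lambda>\<omega>. \<Prod>i\<in>Some ` T. gg i (Y i \<omega>)) = (\<lambda>\<omega>. \<Prod>j\<in>T. g j (X j t \<omega>))"
    by (simp add: prod.reindex gg_def Y_def)
  moreover have "(\<Prod>i\<in>Some ` T. integral\<^sup>L M (\<lambda>\<omega>. gg i (Y i \<omega>))) = (\<Prod>j\<in>T. integral\<^sup>L \<mu> (g j))"
    by (simp add: prod.reindex gg_def Y_def integral_Xj)
  ultimately show ?thesis by simp
qed

definition U :: "real measure" where "U = distr M borel \<epsilon>"

lemma U_prob: "prob_space U" unfolding U_def by (simp add: prob_space_distr)
sublocale UU: prob_space U by (rule U_prob)
lemma sets_U[simp, measurable_cong]: "sets U = sets borel" by (simp add: U_def)
lemma space_U[simp]: "space U = UNIV" by (simp add: U_def)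

lemma cond_eps:
  fixes H :: "real \<Rightarrow> (int \<Rightarrow> real) \<Rightarrow> 'b::{banach, second_countable_topology}"
  assumes Hm[measurable]: "(\<lambda>(e, x). H e x) \<in> borel_measurable (borel \<Otimes>\<^sub>M Pi\<^sub>M T (\<lambda>_. borel))"
    and Hb: "\<And>e x. norm (H e x) \<le> B"
  shows "integral\<^sup>L M (\<lambda>\<omega>. H (\<epsilon> \<omega>) (\<lambda>j\<in>T. X j t \<omega>)) = integral\<^sup>L U (\<lambda>e. integral\<^sup>L M (\<lambda>\<omega>. H e (\<lambda>j\<in>T. X j t \<omega>)))"
proof -
  let ?Z = "\<lambda>\<omega>. \<lambda>j\<in>T. X j t \<omega>"
  let ?V1 = "\<lambda>\<omega>. restrict (\<lambda>i. Y i \<omega>) {None}"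
  let ?V2 = "\<lambda>\<omega>. restrict (\<lambda>i. Y i \<omega>) (Some ` T)"
  let ?S1 = "Pi\<^sub>M {None} (\<lambda>_. borel) :: (int option \<Rightarrow> real) measure"
  let ?S2 = "Pi\<^sub>M (Some ` T) (\<lambda>_. borel) :: (int option \<Rightarrow> real) measure"
  let ?P1 = "distr M ?S1 ?V1"
  let ?P2 = "distr M ?S2 ?V2"
  let ?H = "\<lambda>(f, g). H (f None) (\<lambda>j\<in>T. g (Some j))"
  have V1m[measurable]: "?V1 \<in> measurable M ?S1" by measurable
  have V2m[measurable]: "?V2 \<in> measurable M ?S2" by measurable
  have Hm'[measurable]: "?H \<in> borel_measurable (?S1 \<Otimes>\<^sub>M ?S2)"
  proof -
    have "(\<lambda>(f, g). (f None, (\<lambda>j\<in>T. g (Some j)))) \<in> measurable (?S1 \<Otimes>\<^sub>M ?S2) (borel \<Otimes>\<^sub>M Pi\<^sub>M T (\<lambda>_. borel))"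
      by measurable
    from measurable_comp[OF this Hm] show ?thesis by (simp add: comp_def case_prod_beta)
  qed
  interpret P1: prob_space ?P1 by (rule prob_space_distr) simp
  interpret P2: prob_space ?P2 by (rule prob_space_distr) simp
  interpret PP: pair_prob_space ?P1 ?P2 by unfold_locales
  have ind: "indep_var ?S1 ?V1 ?S2 ?V2"
    by (rule indep_var_restrict[OF indep_Y]) auto
  have eq: "?P1 \<Otimes>\<^sub>M ?P2 = distr M (?S1 \<Otimes>\<^sub>M ?S2) (\<lambda>x. (?V1 x, ?V2 x))"
    using ind unfolding indep_var_distribution_eq by blast
  have Z: "(\<lambda>j\<in>T. ?V2 \<omega> (Some j)) = ?Z \<omega>" for \<omega> by (auto simp: Y_def fun_eq_iff)
  have "integral\<^sup>L M (\<lambda>\<omega>. H (\<epsilon> \<omega>) (?Z \<omega>)) = integral\<^sup>L M (\<lambda>\<omega>. ?H (?V1 \<omega>, ?V2 \<omega>))"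
    by (simp only: case_prod_conv Z) (simp add: Y_def)
  also have "\<dots> = integral\<^sup>L (distr M (?S1 \<Otimes>\<^sub>M ?S2) (\<lambda>x. (?V1 x, ?V2 x))) ?H"
    by (subst integral_distr) auto
  also have "\<dots> = integral\<^sup>L (?P1 \<Otimes>\<^sub>M ?P2) ?H" unfolding eq ..
  also have "\<dots> = integral\<^sup>L ?P1 (\<lambda>f. integral\<^sup>L ?P2 (\<lambda>g. ?H (f, g)))"
  proof (rule PP.integral_fst'[symmetric])
    show "integrable (?P1 \<Otimes>\<^sub>M ?P2) ?H"
      by (rule PP.P.integrable_const_bound[where B=B]) (use Hb in auto)
  qed
  also have "\<dots> = integral\<^sup>L ?P1 (\<lambda>f. integral\<^sup>L M (\<lambda>\<omega>. H (f None) (?Z \<omega>)))"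
  proof -
    have "integral\<^sup>L ?P2 (\<lambda>g. ?H (f, g)) = integral\<^sup>L M (\<lambda>\<omega>. H (f None) (?Z \<omega>))" for f
    proof -
      have "integral\<^sup>L ?P2 (\<lambda>g. ?H (f, g)) = integral\<^sup>L M (\<lambda>\<omega>. ?H (f, ?V2 \<omega>))"
        by (subst integral_distr) auto
      then show ?thesis by (simp only: case_prod_conv Z)
    qed
    then have "(\<lambda>f. integral\<^sup>L ?P2 (\<lambda>g. ?H (f, g))) = (\<lambda>f. integral\<^sup>L M (\<lambda>\<omega>. H (f None) (?Z \<omega>)))"
      by (intro ext)
    then show ?thesis by (rule arg_cong)
  qed
  also have "\<dots> = integral\<^sup>L M (\<lambda>\<omega>. integral\<^sup>L M (\<lambda>\<omega>'. H (\<epsilon> \<omega>) (?Z \<omega>')))"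
    by (subst integral_distr) (auto simp: Y_def[of None])
  also have "\<dots> = integral\<^sup>L U (\<lambda>e. integral\<^sup>L M (\<lambda>\<omega>. H e (?Z \<omega>)))"
    unfolding U_def by (subst integral_distr) auto
  finally show ?thesis .
qed

end

lemma card_filter_sum:
  "finite T \<Longrightarrow> real (card {j\<in>T. P j}) = (\<Sum>j\<in>T. if P j then 1 else (0::real))"
  by (simp add: sum.If_cases Int_def conj_commute)

definition TJ :: "nat \<Rightarrow> int set" where "TJ J = {- int J..int J}"

lemma finite_TJ[simp]: "finite (TJ J)" by (simp add: TJ_def)

lemma finite_subset_TJ: "finite (S::int set) \<Longrightarrow> \<exists>J0. \<forall>J\<ge>J0. S \<subseteq> TJ J"
proof -
  assume "finite S"
  then obtain B where B: "abs ` S \<subseteq> {..B}" using finite_int_iff_bounded_le by blast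
  have "S \<subseteq> TJ J" if "nat B \<le> J" for J
  proof
    fix j assume "j \<in> S"
    then have "\<bar>j\<bar> \<le> B" using B by auto
    moreover have "B \<le> int J" using that by (simp add: nat_le_iff)
    ultimately show "j \<in> TJ J" by (auto simp: TJ_def abs_le_iff)
  qed
  then show ?thesis by blast
qed

lemma TJ_mono: "J \<le> J' \<Longrightarrow> TJ J \<subseteq> TJ J'" by (auto simp: TJ_def)

lemma card_TJ_tendsto:
  assumes "finite (S::int set)"
  shows "(\<lambda>J. real (card (S \<inter> TJ J))) \<longlonglongrightarrow> real (card S)"
proof -
  obtain J0 where "\<forall>J\<ge>J0. S \<subseteq> TJ J" using finite_subset_TJ[OF assms] by blast
  then have "\<forall>J\<ge>J0. real (card (S \<inter> TJ J)) = real (card S)" by (simp add: Int_absorb2)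
  then show ?thesis by (intro tendsto_eventually) (auto simp: eventually_sequentially)
qed

lemma infinite_card_TJ_unbounded:
  assumes "infinite (S::int set)"
  shows "\<exists>J. real (card (S \<inter> TJ J)) > B"
proof -
  obtain F where F: "F \<subseteq> S" "finite F" "card F = nat \<lceil>B\<rceil> + 1"
    using infinite_arbitrarily_large[OF assms] by blast
  obtain J0 where "\<forall>J\<ge>J0. F \<subseteq> TJ J" using finite_subset_TJ[OF F(2)] by blast
  then have "F \<subseteq> S \<inter> TJ J0" using F by auto
  then have "card F \<le> card (S \<inter> TJ J0)" by (intro card_mono) (auto simp: TJ_def)
  then have "real (card (S \<inter> TJ J0)) \<ge> real (nat \<lceil>B\<rceil> + 1)" using F by simp
  moreover have "real (nat \<lceil>B\<rceil> + 1) > B" by linarith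
  ultimately have "B < real (card (S \<inter> TJ J0))" by linarith
  then show ?thesis by blast
qed

context stbl
begin

definition cnt :: "int set \<Rightarrow> real \<Rightarrow> real \<Rightarrow> real \<Rightarrow> real" where
  "cnt T L e x = real (card {j\<in>T. x + a * (real_of_int j - e) \<in> {0..L}})"
definition cntZ :: "real \<Rightarrow> real \<Rightarrow> real \<Rightarrow> real" where
  "cntZ L e x = real (card {j. x + a * (real_of_int j - e) \<in> {0..L}})"
definition cnt2 :: "int set \<Rightarrow> real \<Rightarrow> real \<Rightarrow> real \<Rightarrow> real \<Rightarrow> real" where
  "cnt2 T L e x y = real (card {j\<in>T. x + a * (real_of_int j - e) \<in> {0..L} \<and> y + a * (real_of_int j - e) \<in> {0..L}})"
definition cnt2Z :: "real \<Rightarrow> real \<Rightarrow> real \<Rightarrow> real \<Rightarrow> real" where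
  "cnt2Z L e x y = real (card {j. x + a * (real_of_int j - e) \<in> {0..L} \<and> y + a * (real_of_int j - e) \<in> {0..L}})"

lemma set1_eq: "{j. x + a * (real_of_int j - e) \<in> {0..L}} = {j::int. a*e - x \<le> a * j \<and> a * j \<le> (a*e - x) + L}"
  by (auto simp: algebra_simps)

lemma set2_eq: "{j. x + a * (real_of_int j - e) \<in> {0..L} \<and> y + a * (real_of_int j - e) \<in> {0..L}}
   = {j::int. max (a*e - x) (a*e - y) \<le> a * j \<and> a * j \<le> min (a*e - x + L) (a*e - y + L)}"
  by (auto simp: algebra_simps)

lemma finite_set1: "finite {j. x + a * (real_of_int j - e) \<in> {0..L}}"
  by (subst set1_eq) (rule lattice_card(1)[OF a0])

lemma finite_set2: "finite {j. x + a * (real_of_int j - e) \<in> {0..L} \<and> y + a * (real_of_int j - e) \<in> {0..L}}"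
  by (rule finite_subset[OF _ finite_set1[of x e L]]) auto

lemma cntZ_bounds:
  assumes "0 \<le> L"
  shows "cntZ L e x \<le> L / a + 1" "L / a - 1 \<le> cntZ L e x"
proof -
  have "cntZ L e x \<le> max 0 (((a*e - x) + L - (a*e - x)) / a) + 1"
    unfolding cntZ_def set1_eq by (rule lattice_card(2)[OF a0])
  then show "cntZ L e x \<le> L / a + 1" using assms a0 by simp
  have "cntZ L e x \<ge> (((a*e - x) + L - (a*e - x)) / a) - 1"
    unfolding cntZ_def set1_eq by (rule lattice_card(3)[OF a0])
  then show "L / a - 1 \<le> cntZ L e x" by simp
qed

lemma cnt2Z_bounds:
  shows "cnt2Z L e x y \<le> max 0 (L - \<bar>x - y\<bar>) / a + 1" "max 0 (L - \<bar>x - y\<bar>) / a - 1 \<le> cnt2Z L e x y"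
proof -
  have d: "min (a*e - x + L) (a*e - y + L) - max (a*e - x) (a*e - y) = L - \<bar>x - y\<bar>"
    by (auto simp: min_def max_def abs_if)
  have m: "max 0 ((L - \<bar>x - y\<bar>) / a) = max 0 (L - \<bar>x - y\<bar>) / a" using a0
    by (auto simp: max_def divide_le_0_iff zero_le_divide_iff)
  have "cnt2Z L e x y \<le> max 0 ((min (a*e - x + L) (a*e - y + L) - max (a*e - x) (a*e - y)) / a) + 1"
    unfolding cnt2Z_def set2_eq by (rule lattice_card(2)[OF a0])
  then show "cnt2Z L e x y \<le> max 0 (L - \<bar>x - y\<bar>) / a + 1" unfolding d m .
  have "cnt2Z L e x y \<ge> (min (a*e - x + L) (a*e - y + L) - max (a*e - x) (a*e - y)) / a - 1"
    unfolding cnt2Z_def set2_eq by (rule lattice_card(3)[OF a0])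
  moreover have "cnt2Z L e x y \<ge> 0" by (simp add: cnt2Z_def)
  ultimately show "max 0 (L - \<bar>x - y\<bar>) / a - 1 \<le> cnt2Z L e x y" unfolding d m[symmetric]
    by (auto simp: max_def)
qed

lemma cnt_le_cntZ: "cnt T L e x \<le> cntZ L e x"
  unfolding cnt_def cntZ_def by (simp only: of_nat_le_iff) (rule card_mono[OF finite_set1], auto)

lemma cnt2_le_cnt2Z: "cnt2 T L e x y \<le> cnt2Z L e x y"
  unfolding cnt2_def cnt2Z_def by (simp only: of_nat_le_iff) (rule card_mono[OF finite_set2], auto)

lemma cnt_TJ_tendsto: "(\<lambda>J. cnt (TJ J) L e x) \<longlonglongrightarrow> cntZ L e x"
proof -
  have "{j \<in> TJ J. x + a * (real_of_int j - e) \<in> {0..L}} = {j. x + a * (real_of_int j - e) \<in> {0..L}} \<inter> TJ J" for J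
    by auto
  then show ?thesis unfolding cnt_def cntZ_def using card_TJ_tendsto[OF finite_set1] by simp
qed

lemma cnt2_TJ_tendsto: "(\<lambda>J. cnt2 (TJ J) L e x y) \<longlonglongrightarrow> cnt2Z L e x y"
proof -
  have "{j \<in> TJ J. x + a * (real_of_int j - e) \<in> {0..L} \<and> y + a * (real_of_int j - e) \<in> {0..L}}
    = {j. x + a * (real_of_int j - e) \<in> {0..L} \<and> y + a * (real_of_int j - e) \<in> {0..L}} \<inter> TJ J" for J
    by auto
  then show ?thesis unfolding cnt2_def cnt2Z_def using card_TJ_tendsto[OF finite_set2] by simp
qed

lemma cnt_sum: "finite T \<Longrightarrow> cnt T L e x = (\<Sum>j\<in>T. if x + a * (real_of_int j - e) \<in> {0..L} then 1 else 0)"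
  unfolding cnt_def by (rule card_filter_sum)

lemma cnt2_sum: "finite T \<Longrightarrow> cnt2 T L e x y = (\<Sum>j\<in>T. if x + a * (real_of_int j - e) \<in> {0..L} \<and> y + a * (real_of_int j - e) \<in> {0..L} then 1 else 0)"
  unfolding cnt2_def by (rule card_filter_sum)

lemma cnt_meas[measurable]:
  assumes [measurable]: "fe \<in> borel_measurable N" "fx \<in> borel_measurable N"
  shows "(\<lambda>w. cnt (TJ J) L (fe w) (fx w)) \<in> borel_measurable N"
  by (simp add: cnt_sum)

lemma cntZ_meas[measurable]:
  assumes [measurable]: "fe \<in> borel_measurable N" "fx \<in> borel_measurable N"
  shows "(\<lambda>w. cntZ L (fe w) (fx w)) \<in> borel_measurable N"
  by (rule borel_measurable_LIMSEQ_real[where u="\<lambda>J w. cnt (TJ J) L (fe w) (fx w)"])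
     (auto intro: cnt_TJ_tendsto)

lemma cnt2_meas[measurable]:
  assumes [measurable]: "fe \<in> borel_measurable N" "fx \<in> borel_measurable N" "fy \<in> borel_measurable N"
  shows "(\<lambda>w. cnt2 (TJ J) L (fe w) (fx w) (fy w)) \<in> borel_measurable N"
  by (simp add: cnt2_sum)

lemma cnt2Z_meas[measurable]:
  assumes [measurable]: "fe \<in> borel_measurable N" "fx \<in> borel_measurable N" "fy \<in> borel_measurable N"
  shows "(\<lambda>w. cnt2Z L (fe w) (fx w) (fy w)) \<in> borel_measurable N"
  by (rule borel_measurable_LIMSEQ_real[where u="\<lambda>J w. cnt2 (TJ J) L (fe w) (fx w) (fy w)"])
     (auto intro: cnt2_TJ_tendsto)

end

context stbl
begin

definition pj :: "real \<Rightarrow> real \<Rightarrow> int \<Rightarrow> real" where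
  "pj L e j = measure \<mu> {x. x + a * (real_of_int j - e) \<in> {0..L}}"
definition mT :: "int set \<Rightarrow> real \<Rightarrow> real \<Rightarrow> real" where
  "mT T L e = (\<Sum>j\<in>T. pj L e j)"
definition qT :: "int set \<Rightarrow> real \<Rightarrow> real \<Rightarrow> real" where
  "qT T L e = (\<Sum>j\<in>T. (pj L e j)^2)"
definition mZ :: "real \<Rightarrow> real \<Rightarrow> real" where
  "mZ L e = integral\<^sup>L \<mu> (\<lambda>x. cntZ L e x)"
definition qZ :: "real \<Rightarrow> real \<Rightarrow> real" where
  "qZ L e = integral\<^sup>L \<mu> (\<lambda>y. integral\<^sup>L \<mu> (\<lambda>x. cnt2Z L e x y))"
definition Gf :: "real \<Rightarrow> real" where
  "Gf L = integral\<^sup>L \<mu> (\<lambda>y. integral\<^sup>L \<mu> (\<lambda>x. max 0 (L - \<bar>x - y\<bar>))) / a"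

lemma prob_UNIV[simp]: "measure \<mu> UNIV = 1" using mu.prob_space by simp

lemma A_sets[measurable]: "{x. x + a * (real_of_int j - e) \<in> {0..L}} \<in> sets borel"
  by measurable

lemma pj_ge0: "0 \<le> pj L e j" by (simp add: pj_def)
lemma pj_le1: "pj L e j \<le> 1" by (simp add: pj_def)

lemma ind_eq: "(if P then 1 else 0) = (indicator {x. P} x :: real)"
  by (simp add: indicator_def)

lemma pj_int: "pj L e j = integral\<^sup>L \<mu> (\<lambda>x. if x + a * (real_of_int j - e) \<in> {0..L} then 1 else 0)"
proof -
  have "integral\<^sup>L \<mu> (\<lambda>x. if x + a * (real_of_int j - e) \<in> {0..L} then 1 else 0)
      = integral\<^sup>L \<mu> (indicator {x. x + a * (real_of_int j - e) \<in> {0..L}})"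
    by (intro Bochner_Integration.integral_cong) (auto simp: indicator_def)
  also have "\<dots> = pj L e j" unfolding pj_def by (subst Bochner_Integration.integral_indicator) auto
  finally show ?thesis ..
qed

lemma bounded_int_mu:
  fixes f :: "real \<Rightarrow> real"
  assumes "f \<in> borel_measurable borel" "\<And>x. \<bar>f x\<bar> \<le> B"
  shows "integrable \<mu> f"
proof (rule mu.integrable_const_bound[where B=B])
  show "AE x in \<mu>. norm (f x) \<le> B" using assms by auto
qed (use assms in auto)

lemma abs_integral_mu_le:
  fixes f :: "real \<Rightarrow> real"
  assumes "f \<in> borel_measurable borel" "\<And>x. \<bar>f x\<bar> \<le> B"
  shows "\<bar>integral\<^sup>L \<mu> f\<bar> \<le> B"
proof -
  have B0: "0 \<le> B" using assms(2)[of 0] by linarith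
  have "\<bar>integral\<^sup>L \<mu> f\<bar> \<le> integral\<^sup>L \<mu> (\<lambda>x. \<bar>f x\<bar>)" by (rule integral_abs_bound)
  also have "\<dots> \<le> integral\<^sup>L \<mu> (\<lambda>x. B)"
    using assms B0 by (intro integral_mono bounded_int_mu[where B=B]) auto
  finally show ?thesis by simp
qed

lemma mT_eq: "mT (TJ J) L e = integral\<^sup>L \<mu> (\<lambda>x. cnt (TJ J) L e x)"
proof -
  have "mT (TJ J) L e = (\<Sum>j\<in>TJ J. integral\<^sup>L \<mu> (\<lambda>x. if x + a * (real_of_int j - e) \<in> {0..L} then 1 else 0))"
    unfolding mT_def pj_int ..
  also have "\<dots> = integral\<^sup>L \<mu> (\<lambda>x. \<Sum>j\<in>TJ J. if x + a * (real_of_int j - e) \<in> {0..L} then 1 else 0)"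
    by (rule Bochner_Integration.integral_sum[symmetric]) (auto intro!: bounded_int_mu[where B=1])
  finally show ?thesis by (simp add: cnt_sum)
qed

lemma inner_meas[measurable]:
  "(\<lambda>y. integral\<^sup>L \<mu> (\<lambda>x. cnt2 (TJ J) L e x y)) \<in> borel_measurable borel"
  "(\<lambda>y. integral\<^sup>L \<mu> (\<lambda>x. cnt2Z L e x y)) \<in> borel_measurable borel"
  "(\<lambda>y. integral\<^sup>L \<mu> (\<lambda>x. max 0 (L - \<bar>x - y\<bar>))) \<in> borel_measurable borel"
  by measurable

lemma qT_eq: "qT (TJ J) L e = integral\<^sup>L \<mu> (\<lambda>y. integral\<^sup>L \<mu> (\<lambda>x. cnt2 (TJ J) L e x y))"
proof -
  let ?I = "\<lambda>j x. if x + a * (real_of_int j - e) \<in> {0..L} then 1 else (0::real)"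
  have Im[measurable]: "?I j \<in> borel_measurable borel" for j by measurable
  have sq: "(pj L e j)^2 = integral\<^sup>L \<mu> (\<lambda>y. integral\<^sup>L \<mu> (\<lambda>x. ?I j x * ?I j y))" for j
  proof -
    have "(pj L e j)^2 = integral\<^sup>L \<mu> (\<lambda>y. ?I j y * pj L e j)"
      by (simp add: pj_int[of L e j] power2_eq_square)
    also have "\<dots> = integral\<^sup>L \<mu> (\<lambda>y. integral\<^sup>L \<mu> (\<lambda>x. ?I j x * ?I j y))"
      by (intro Bochner_Integration.integral_cong refl) (simp add: pj_int[of L e j] mult.commute)
    finally show ?thesis .
  qed
  have "qT (TJ J) L e = (\<Sum>j\<in>TJ J. integral\<^sup>L \<mu> (\<lambda>y. integral\<^sup>L \<mu> (\<lambda>x. ?I j x * ?I j y)))"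
    unfolding qT_def sq ..
  also have "\<dots> = integral\<^sup>L \<mu> (\<lambda>y. \<Sum>j\<in>TJ J. integral\<^sup>L \<mu> (\<lambda>x. ?I j x * ?I j y))"
  proof (rule Bochner_Integration.integral_sum[symmetric])
    fix j show "integrable \<mu> (\<lambda>y. integral\<^sup>L \<mu> (\<lambda>x. ?I j x * ?I j y))"
    proof (rule bounded_int_mu[where B=1])
      fix y show "\<bar>integral\<^sup>L \<mu> (\<lambda>x. ?I j x * ?I j y)\<bar> \<le> 1"
        by (rule abs_integral_mu_le) auto
    qed measurable
  qed
  also have "\<dots> = integral\<^sup>L \<mu> (\<lambda>y. integral\<^sup>L \<mu> (\<lambda>x. \<Sum>j\<in>TJ J. ?I j x * ?I j y))"
    by (intro Bochner_Integration.integral_cong refl Bochner_Integration.integral_sum[symmetric]) (auto intro!: bounded_int_mu[where B=1])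
  also have "\<dots> = integral\<^sup>L \<mu> (\<lambda>y. integral\<^sup>L \<mu> (\<lambda>x. cnt2 (TJ J) L e x y))"
    by (intro Bochner_Integration.integral_cong refl) (auto simp: cnt2_sum intro!: sum.cong)
  finally show ?thesis .
qed

context
  fixes L :: real assumes L0: "0 \<le> L"
begin

lemma cnt_le: "cnt T L e x \<le> L / a + 1"
  using cnt_le_cntZ[of T L e x] cntZ_bounds(1)[OF L0, of e x] by linarith

lemma cnt2Z_le: "cnt2Z L e x y \<le> L / a + 1"
proof -
  have "max 0 (L - \<bar>x - y\<bar>) / a \<le> L / a" using a0 L0 by (intro divide_right_mono) auto
  then show ?thesis using cnt2Z_bounds(1)[of L e x y] by linarith
qed

lemma cnt2_le: "cnt2 T L e x y \<le> L / a + 1"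
  using cnt2_le_cnt2Z[of T L e x y] cnt2Z_le[of e x y] by linarith

lemma cnt_ge0: "0 \<le> cnt T L e x" by (simp add: cnt_def)
lemma cnt2_ge0: "0 \<le> cnt2 T L e x y" by (simp add: cnt2_def)
lemma cntZ_ge0: "0 \<le> cntZ L e x" by (simp add: cntZ_def)
lemma cnt2Z_ge0: "0 \<le> cnt2Z L e x y" by (simp add: cnt2Z_def)

lemma mT_tendsto: "(\<lambda>J. mT (TJ J) L e) \<longlonglongrightarrow> mZ L e"
  unfolding mT_eq mZ_def
proof (rule integral_dominated_convergence[where w="\<lambda>_. L / a + 1"])
  show "AE x in \<mu>. (\<lambda>J. cnt (TJ J) L e x) \<longlonglongrightarrow> cntZ L e x" by (simp add: cnt_TJ_tendsto)
  show "AE x in \<mu>. norm (cnt (TJ J) L e x) \<le> L / a + 1" for J using cnt_le cnt_ge0 by simp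
qed auto

lemma inner2_tendsto: "(\<lambda>J. integral\<^sup>L \<mu> (\<lambda>x. cnt2 (TJ J) L e x y)) \<longlonglongrightarrow> integral\<^sup>L \<mu> (\<lambda>x. cnt2Z L e x y)"
proof (rule integral_dominated_convergence[where w="\<lambda>_. L / a + 1"])
  show "AE x in \<mu>. (\<lambda>J. cnt2 (TJ J) L e x y) \<longlonglongrightarrow> cnt2Z L e x y" by (simp add: cnt2_TJ_tendsto)
  show "AE x in \<mu>. norm (cnt2 (TJ J) L e x y) \<le> L / a + 1" for J using cnt2_le cnt2_ge0 by simp
qed auto

lemma qT_tendsto: "(\<lambda>J. qT (TJ J) L e) \<longlonglongrightarrow> qZ L e"
  unfolding qT_eq qZ_def
proof (rule integral_dominated_convergence[where w="\<lambda>_. L / a + 1"])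
  show "AE y in \<mu>. (\<lambda>J. integral\<^sup>L \<mu> (\<lambda>x. cnt2 (TJ J) L e x y)) \<longlonglongrightarrow> integral\<^sup>L \<mu> (\<lambda>x. cnt2Z L e x y)"
    by (simp add: inner2_tendsto)
  show "AE y in \<mu>. norm (integral\<^sup>L \<mu> (\<lambda>x. cnt2 (TJ J) L e x y)) \<le> L / a + 1" for J
  proof -
    have "\<bar>integral\<^sup>L \<mu> (\<lambda>x. cnt2 (TJ J) L e x y)\<bar> \<le> L / a + 1" for y
      by (rule abs_integral_mu_le) (use cnt2_le cnt2_ge0 in auto)
    then show ?thesis by simp
  qed
qed auto

lemma mZ_bounds: "mZ L e \<le> L / a + 1" "L / a - 1 \<le> mZ L e"
proof -
  have "\<bar>mZ L e - (L / a)\<bar> \<le> 1"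
  proof -
    have i1: "integrable \<mu> (\<lambda>x. cntZ L e x)"
      by (rule bounded_int_mu[where B="L/a+1"]) (auto simp: cntZ_bounds[OF L0] cntZ_ge0 abs_le_iff)
    have "mZ L e - L / a = integral\<^sup>L \<mu> (\<lambda>x. cntZ L e x) - integral\<^sup>L \<mu> (\<lambda>x. L / a)"
      unfolding mZ_def by (simp add: mu.prob_space)
    also have "\<dots> = integral\<^sup>L \<mu> (\<lambda>x. cntZ L e x - L / a)"
      using i1 by (rule Bochner_Integration.integral_diff[symmetric]) simp
    also have "\<bar>\<dots>\<bar> \<le> 1"
    proof (rule abs_integral_mu_le)
      show "\<bar>cntZ L e x - L / a\<bar> \<le> 1" for x using cntZ_bounds[OF L0, of e x] by linarith
    qed measurable
    finally show ?thesis .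
  qed
  then show "mZ L e \<le> L / a + 1" "L / a - 1 \<le> mZ L e" by auto
qed

lemma qZ_Gf: "\<bar>qZ L e - Gf L\<bar> \<le> 1"
proof -
  let ?f = "\<lambda>y. integral\<^sup>L \<mu> (\<lambda>x. cnt2Z L e x y)"
  let ?g = "\<lambda>y. integral\<^sup>L \<mu> (\<lambda>x. max 0 (L - \<bar>x - y\<bar>) / a)"
  have g: "?g y = integral\<^sup>L \<mu> (\<lambda>x. max 0 (L - \<bar>x - y\<bar>)) / a" for y by simp
  have bd1: "\<bar>max 0 (L - \<bar>x - y\<bar>) / a\<bar> \<le> L / a" for x y
    using a0 L0 by (auto intro!: divide_right_mono simp: abs_le_iff)
  have bd2: "\<bar>cnt2Z L e x y\<bar> \<le> L / a + 1" for x y using cnt2Z_le cnt2Z_ge0 by simp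
  have inner: "\<bar>?f y - ?g y\<bar> \<le> 1" for y
  proof -
    have i1: "integrable \<mu> (\<lambda>x. cnt2Z L e x y)" by (rule bounded_int_mu[where B="L/a+1", OF _ bd2]) measurable
    have i2: "integrable \<mu> (\<lambda>x. max 0 (L - \<bar>x - y\<bar>) / a)" by (rule bounded_int_mu[where B="L/a", OF _ bd1]) measurable
    have "?f y - ?g y = integral\<^sup>L \<mu> (\<lambda>x. cnt2Z L e x y - max 0 (L - \<bar>x - y\<bar>) / a)"
      by (rule Bochner_Integration.integral_diff[symmetric, OF i1 i2])
    also have "\<bar>\<dots>\<bar> \<le> 1"
    proof (rule abs_integral_mu_le)
      show "\<bar>cnt2Z L e x y - max 0 (L - \<bar>x - y\<bar>) / a\<bar> \<le> 1" for x
        using cnt2Z_bounds(1)[where L=L and e=e and x=x and y=y] cnt2Z_bounds(2)[where L=L and e=e and x=x and y=y] by linarith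
    qed measurable
    finally show ?thesis .
  qed
  have fi: "integrable \<mu> ?f"
    by (rule bounded_int_mu[where B="L/a+1"]) (auto intro!: abs_integral_mu_le bd2)
  have gi: "integrable \<mu> ?g"
  proof (rule bounded_int_mu[where B="L/a"])
    show "\<bar>?g y\<bar> \<le> L / a" for y by (rule abs_integral_mu_le[OF _ bd1]) measurable
  qed measurable
  have "qZ L e - Gf L = integral\<^sup>L \<mu> ?f - integral\<^sup>L \<mu> ?g"
    unfolding qZ_def Gf_def g by simp
  also have "\<dots> = integral\<^sup>L \<mu> (\<lambda>y. ?f y - ?g y)" using fi gi by simp
  also have "\<bar>\<dots>\<bar> \<le> 1" by (rule abs_integral_mu_le[OF _ inner]) measurable
  finally show ?thesis .
qed

end

end

context stbl
begin

lemma no_first_moment: "\<not> integrable \<mu> (\<lambda>x. x)"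
proof
  assume int1: "integrable \<mu> (\<lambda>x. x)"
  define \<kappa> where "\<kappa> = t * c"
  have \<kappa>0: "0 < \<kappa>" unfolding \<kappa>_def using t0 c0 by simp
  define E where "E \<theta> = integral\<^sup>L \<mu> (\<lambda>x. min (2 * \<bar>x\<bar> ^ 1 * real (Suc 1)) (\<bar>\<theta>\<bar> * \<bar>x\<bar> ^ Suc 1))" for \<theta>
  have key: "1 - exp (- (\<kappa> * \<theta>)) \<le> \<theta> / 2 * E \<theta>" if th: "0 < \<theta>" "\<theta> \<le> 1" for \<theta>
  proof -
    have mom: "integrable \<mu> (\<lambda>x. x ^ k)" if "k \<le> 1" for k
    proof -
      have "k = 0 \<or> k = 1" using that by auto
      then show ?thesis using int1 by auto
    qed
    have A: "cmod (char \<mu> \<theta> - (\<Sum>k \<le> 1. ((\<i> * \<theta>)^k / fact k) * integral\<^sup>L \<mu> (\<lambda>x. x^k))) \<le>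
      (\<bar>\<theta>\<bar>^1 / fact (Suc 1)) * E \<theta>"
      unfolding E_def by (rule mu.char_approx2[OF mom])
    have s: "(\<Sum>k \<le> 1. ((\<i> * \<theta>)^k / fact k) * complex_of_real (integral\<^sup>L \<mu> (\<lambda>x. x^k)))
        = 1 + \<i> * \<theta> * integral\<^sup>L \<mu> (\<lambda>x. x)"
      by (simp add: mu.prob_space)
    have "\<bar>Re (char \<mu> \<theta> - (1 + \<i> * \<theta> * integral\<^sup>L \<mu> (\<lambda>x. x)))\<bar> \<le> cmod (char \<mu> \<theta> - (1 + \<i> * \<theta> * integral\<^sup>L \<mu> (\<lambda>x. x)))"
      by (rule abs_Re_le_cmod)
    also have "\<dots> \<le> \<theta> / 2 * E \<theta>" using A th unfolding s by simp
    finally have B: "\<bar>exp (- (\<kappa> * \<theta> powr \<alpha>)) - 1\<bar> \<le> \<theta> / 2 * E \<theta>"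
      using th by (simp add: char_\<mu> \<kappa>_def mult.assoc)
    have "\<theta> powr 1 \<le> \<theta> powr \<alpha>" using th \<alpha>1 by (intro powr_mono') auto
    then have "\<theta> \<le> \<theta> powr \<alpha>" using th by simp
    then have "exp (- (\<kappa> * \<theta> powr \<alpha>)) \<le> exp (- (\<kappa> * \<theta>))" using \<kappa>0 by simp
    moreover have "1 - exp (- (\<kappa> * \<theta> powr \<alpha>)) \<le> \<theta> / 2 * E \<theta>"
    proof -
      have "1 - exp (- (\<kappa> * \<theta> powr \<alpha>)) \<le> \<bar>exp (- (\<kappa> * \<theta> powr \<alpha>)) - 1\<bar>" by linarith
      then show ?thesis using B by linarith
    qed
    ultimately show ?thesis by linarith
  qed
  have low: "\<kappa> * \<theta> / (1 + \<kappa> * \<theta>) \<le> 1 - exp (- (\<kappa> * \<theta>))" if "0 \<le> \<theta>" for \<theta>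
  proof -
    have p: "0 < 1 + \<kappa> * \<theta>" using \<kappa>0 that by (simp add: add_pos_nonneg)
    have "1 + \<kappa> * \<theta> \<le> exp (\<kappa> * \<theta>)" by (rule exp_ge_add_one_self)
    then have "exp (- (\<kappa> * \<theta>)) \<le> 1 / (1 + \<kappa> * \<theta>)" using p
      by (simp add: exp_minus field_simps)
    moreover have "1 - 1 / (1 + \<kappa> * \<theta>) = \<kappa> * \<theta> / (1 + \<kappa> * \<theta>)" using p by (simp add: field_simps)
    ultimately show ?thesis by linarith
  qed
  define \<theta> where "\<theta> n = 1 / (real n + 1)" for n
  have th0: "0 < \<theta> n" "\<theta> n \<le> 1" for n by (auto simp: \<theta>_def field_simps)
  have lowE: "2 * \<kappa> / (1 + \<kappa>) \<le> E (\<theta> n)" for n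
  proof -
    have "\<kappa> * \<theta> n / (1 + \<kappa>) \<le> \<kappa> * \<theta> n / (1 + \<kappa> * \<theta> n)"
      using th0[of n] \<kappa>0 by (intro divide_left_mono) (auto simp: mult_left_le add_pos_nonneg)
    also have "\<dots> \<le> \<theta> n / 2 * E (\<theta> n)" using low[of "\<theta> n"] key[OF th0[of n]] th0[of n] by linarith
    finally have "\<kappa> * \<theta> n / (1 + \<kappa>) \<le> \<theta> n / 2 * E (\<theta> n)" .
    moreover have "\<kappa> * \<theta> n / (1 + \<kappa>) = \<theta> n * (\<kappa> / (1 + \<kappa>))" by simp
    moreover have "\<theta> n / 2 * E (\<theta> n) = \<theta> n * (E (\<theta> n) / 2)" by simp
    ultimately have "\<theta> n * (\<kappa> / (1 + \<kappa>)) \<le> \<theta> n * (E (\<theta> n) / 2)" by simp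
    then have "\<kappa> / (1 + \<kappa>) \<le> E (\<theta> n) / 2" using th0[of n] mult_left_le_imp_le by blast
    then have "2 * (\<kappa> / (1 + \<kappa>)) \<le> E (\<theta> n)" by linarith
    then show ?thesis by (simp add: times_divide_eq_right)
  qed
  have "(\<lambda>n. E (\<theta> n)) \<longlonglongrightarrow> integral\<^sup>L \<mu> (\<lambda>x. 0)"
    unfolding E_def
  proof (rule integral_dominated_convergence[where w="\<lambda>x. 4 * \<bar>x\<bar>"])
    show "integrable \<mu> (\<lambda>x. 4 * \<bar>x\<bar>)" using int1 by auto
    show "AE x in \<mu>. norm (min (2 * \<bar>x\<bar> ^ 1 * real (Suc 1)) (\<bar>\<theta> n\<bar> * \<bar>x\<bar> ^ Suc 1)) \<le> 4 * \<bar>x\<bar>" for n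
      using th0[of n] by auto
    show "AE x in \<mu>. (\<lambda>n. min (2 * \<bar>x\<bar> ^ 1 * real (Suc 1)) (\<bar>\<theta> n\<bar> * \<bar>x\<bar> ^ Suc 1)) \<longlonglongrightarrow> 0"
    proof (rule AE_I2)
      fix x :: real
      have t1: "(\<lambda>n. \<theta> n * \<bar>x\<bar> ^ Suc 1) \<longlonglongrightarrow> 0 * \<bar>x\<bar> ^ Suc 1"
      proof -
        have "(\<lambda>n. \<theta> n) \<longlonglongrightarrow> 0"
        proof -
          have "\<theta> = (\<lambda>n. inverse (real (Suc n)))" by (auto simp: \<theta>_def fun_eq_iff inverse_eq_divide)
          then show ?thesis using LIMSEQ_inverse_real_of_nat by simp
        qed
        then show ?thesis by (intro tendsto_intros)
      qed
      show "(\<lambda>n. min (2 * \<bar>x\<bar> ^ 1 * real (Suc 1)) (\<bar>\<theta> n\<bar> * \<bar>x\<bar> ^ Suc 1)) \<longlonglongrightarrow> 0"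
      proof (rule tendsto_sandwich[where f="\<lambda>_. 0" and h="\<lambda>n. \<theta> n * \<bar>x\<bar> ^ Suc 1"])
        show "\<forall>\<^sub>F n in sequentially. 0 \<le> min (2 * \<bar>x\<bar> ^ 1 * real (Suc 1)) (\<bar>\<theta> n\<bar> * \<bar>x\<bar> ^ Suc 1)"
          by simp
        show "\<forall>\<^sub>F n in sequentially. min (2 * \<bar>x\<bar> ^ 1 * real (Suc 1)) (\<bar>\<theta> n\<bar> * \<bar>x\<bar> ^ Suc 1) \<le> \<theta> n * \<bar>x\<bar> ^ Suc 1"
        proof (rule always_eventually, rule allI)
          fix n
          have "\<bar>\<theta> n\<bar> = \<theta> n" using th0[of n] by simp
          then show "min (2 * \<bar>x\<bar> ^ 1 * real (Suc 1)) (\<bar>\<theta> n\<bar> * \<bar>x\<bar> ^ Suc 1) \<le> \<theta> n * \<bar>x\<bar> ^ Suc 1"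
            by (simp only: min.cobounded2)
        qed
      qed (use t1 in auto)
    qed
  qed auto
  then have "(\<lambda>n. E (\<theta> n)) \<longlonglongrightarrow> 0" by simp
  moreover have "2 * \<kappa> / (1 + \<kappa>) > 0" using \<kappa>0 by simp
  ultimately show False using lowE
    by (metis LIMSEQ_le_const not_le)
qed

end

lemma SUP_ennreal_min:
  fixes d :: real assumes "0 \<le> d"
  shows "(SUP n::nat. ennreal (min (real n) d)) = ennreal d"
proof (rule antisym)
  show "(SUP n::nat. ennreal (min (real n) d)) \<le> ennreal d"
    by (rule SUP_least) (auto intro: ennreal_leI)
  have "ennreal d = ennreal (min (real (nat \<lceil>d\<rceil>)) d)" by (simp add: min_def) linarith
  also have "\<dots> \<le> (SUP n::nat. ennreal (min (real n) d))" by (rule SUP_upper) simp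
  finally show "ennreal d \<le> (SUP n::nat. ennreal (min (real n) d))" .
qed

context stbl
begin

definition Wf :: "real \<Rightarrow> real" where "Wf L = L / a - Gf L"

lemma min_int_meas[measurable]: "(\<lambda>y. integral\<^sup>L \<mu> (\<lambda>x. min L \<bar>x - y\<bar>)) \<in> borel_measurable borel"
  by measurable

lemma Wf_eq:
  assumes L0: "0 \<le> L"
  shows "Wf L = integral\<^sup>L \<mu> (\<lambda>y. integral\<^sup>L \<mu> (\<lambda>x. min L \<bar>x - y\<bar>)) / a"
proof -
  have b1: "\<bar>max 0 (L - \<bar>x - y\<bar>)\<bar> \<le> L" for x y using L0 by auto
  have b2: "\<bar>min L \<bar>x - y\<bar>\<bar> \<le> L" for x y using L0 by auto
  have inner: "integral\<^sup>L \<mu> (\<lambda>x. min L \<bar>x - y\<bar>) = L - integral\<^sup>L \<mu> (\<lambda>x. max 0 (L - \<bar>x - y\<bar>))" for y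
  proof -
    have i1: "integrable \<mu> (\<lambda>x. max 0 (L - \<bar>x - y\<bar>))" by (rule bounded_int_mu[OF _ b1]) measurable
    have "integral\<^sup>L \<mu> (\<lambda>x. min L \<bar>x - y\<bar>) = integral\<^sup>L \<mu> (\<lambda>x. L - max 0 (L - \<bar>x - y\<bar>))"
      by (intro Bochner_Integration.integral_cong refl) (auto simp: min_def max_def)
    also have "\<dots> = integral\<^sup>L \<mu> (\<lambda>x. L) - integral\<^sup>L \<mu> (\<lambda>x. max 0 (L - \<bar>x - y\<bar>))"
      by (rule Bochner_Integration.integral_diff[OF _ i1]) simp
    finally show ?thesis by simp
  qed
  have i2: "integrable \<mu> (\<lambda>y. integral\<^sup>L \<mu> (\<lambda>x. max 0 (L - \<bar>x - y\<bar>)))"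
  proof (rule bounded_int_mu[where B=L])
    show "\<bar>integral\<^sup>L \<mu> (\<lambda>x. max 0 (L - \<bar>x - y\<bar>))\<bar> \<le> L" for y
      by (rule abs_integral_mu_le[OF _ b1]) measurable
  qed measurable
  have "integral\<^sup>L \<mu> (\<lambda>y. integral\<^sup>L \<mu> (\<lambda>x. min L \<bar>x - y\<bar>))
      = integral\<^sup>L \<mu> (\<lambda>y. L - integral\<^sup>L \<mu> (\<lambda>x. max 0 (L - \<bar>x - y\<bar>)))"
    unfolding inner ..
  also have "\<dots> = L - integral\<^sup>L \<mu> (\<lambda>y. integral\<^sup>L \<mu> (\<lambda>x. max 0 (L - \<bar>x - y\<bar>)))"
    using Bochner_Integration.integral_diff[OF _ i2, of "\<lambda>_. L"] by simp
  finally show ?thesis unfolding Wf_def Gf_def using a0 by (simp add: diff_divide_distrib)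
qed

lemma Wf_mono:
  assumes "0 \<le> L" "L \<le> L'"
  shows "Wf L \<le> Wf L'"
proof -
  have L': "0 \<le> L'" using assms by simp
  have b: "\<bar>min K \<bar>x - y\<bar>\<bar> \<le> K" if "0 \<le> K" for K x y :: real
    using that by (cases "K \<le> \<bar>x - y\<bar>") (auto simp: min_def)
  have "integral\<^sup>L \<mu> (\<lambda>y. integral\<^sup>L \<mu> (\<lambda>x. min L \<bar>x - y\<bar>)) \<le> integral\<^sup>L \<mu> (\<lambda>y. integral\<^sup>L \<mu> (\<lambda>x. min L' \<bar>x - y\<bar>))"
  proof (rule integral_mono)
    have "integrable \<mu> (\<lambda>y. integral\<^sup>L \<mu> (\<lambda>x. min K \<bar>x - y\<bar>))" if "0 \<le> K" for K
    proof (rule bounded_int_mu[where B=K])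
      show "\<bar>integral\<^sup>L \<mu> (\<lambda>x. min K \<bar>x - y\<bar>)\<bar> \<le> K" for y
        by (rule abs_integral_mu_le[OF _ b[OF that]]) measurable
    qed measurable
    then show "integrable \<mu> (\<lambda>y. integral\<^sup>L \<mu> (\<lambda>x. min L \<bar>x - y\<bar>))"
      "integrable \<mu> (\<lambda>y. integral\<^sup>L \<mu> (\<lambda>x. min L' \<bar>x - y\<bar>))" using assms L' by auto
    show "integral\<^sup>L \<mu> (\<lambda>x. min L \<bar>x - y\<bar>) \<le> integral\<^sup>L \<mu> (\<lambda>x. min L' \<bar>x - y\<bar>)" for y
      using assms L' by (intro integral_mono bounded_int_mu[OF _ b]) auto
  qed
  then show ?thesis using Wf_eq[OF assms(1)] Wf_eq[OF L'] a0 by (simp add: divide_right_mono)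
qed

lemma Wf_unbounded: "\<exists>L\<ge>0. B < Wf L"
proof (rule ccontr)
  assume "\<not> ?thesis"
  then have bd: "Wf L \<le> B" if "0 \<le> L" for L using that by force
  define h where "h n y = integral\<^sup>L \<mu> (\<lambda>x. min (real n) \<bar>x - y\<bar>)" for n :: nat and y
  have hm[measurable]: "h n \<in> borel_measurable borel" for n unfolding h_def by measurable
  have bn: "\<bar>min (real n) \<bar>x - y\<bar>\<bar> \<le> real n" for n :: nat and x y by auto
  have hint: "integrable \<mu> (h n)" for n
  proof (rule bounded_int_mu[where B="real n"])
    show "\<bar>h n y\<bar> \<le> real n" for y unfolding h_def by (rule abs_integral_mu_le[OF _ bn]) measurable
  qed measurable
  have h0: "0 \<le> h n y" for n y unfolding h_def by (intro integral_nonneg_AE) auto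
  have inner: "ennreal (h n y) = (\<integral>\<^sup>+x. ennreal (min (real n) \<bar>x - y\<bar>) \<partial>\<mu>)" for n y
    unfolding h_def by (rule nn_integral_eq_integral[symmetric]) (auto intro: bounded_int_mu[OF _ bn])
  have outer: "(\<integral>\<^sup>+y. ennreal (h n y) \<partial>\<mu>) \<le> ennreal (a * B)" for n
  proof -
    have "(\<integral>\<^sup>+y. ennreal (h n y) \<partial>\<mu>) = ennreal (integral\<^sup>L \<mu> (h n))"
      by (rule nn_integral_eq_integral[OF hint]) (simp add: h0)
    also have "integral\<^sup>L \<mu> (h n) = a * Wf (real n)"
      using Wf_eq[of "real n"] a0 unfolding h_def by simp
    also have "\<dots> \<le> a * B" using bd[of "real n"] a0 by simp
    finally show ?thesis by (simp add: ennreal_leI)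
  qed
  have inc1: "incseq (\<lambda>n x. ennreal (min (real n) \<bar>x - y\<bar>))" for y
    by (intro incseq_SucI le_funI ennreal_leI) auto
  have sup1: "(SUP n. ennreal (h n y)) = (\<integral>\<^sup>+x. ennreal \<bar>x - y\<bar> \<partial>\<mu>)" for y
  proof -
    have "(SUP n. ennreal (h n y)) = (SUP n. (\<integral>\<^sup>+x. ennreal (min (real n) \<bar>x - y\<bar>) \<partial>\<mu>))"
      unfolding inner ..
    also have "\<dots> = (\<integral>\<^sup>+x. (SUP n. ennreal (min (real n) \<bar>x - y\<bar>)) \<partial>\<mu>)"
      by (rule nn_integral_monotone_convergence_SUP[symmetric, OF inc1]) simp
    also have "\<dots> = (\<integral>\<^sup>+x. ennreal \<bar>x - y\<bar> \<partial>\<mu>)"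
      by (simp add: SUP_ennreal_min)
    finally show ?thesis .
  qed
  have inc2: "incseq (\<lambda>n y. ennreal (h n y))"
  proof (intro incseq_SucI le_funI ennreal_leI)
    fix n y show "h n y \<le> h (Suc n) y" unfolding h_def
      by (intro integral_mono bounded_int_mu[OF _ bn]) auto
  qed
  have "(\<integral>\<^sup>+y. (\<integral>\<^sup>+x. ennreal \<bar>x - y\<bar> \<partial>\<mu>) \<partial>\<mu>) = (\<integral>\<^sup>+y. (SUP n. ennreal (h n y)) \<partial>\<mu>)"
    unfolding sup1 ..
  also have "\<dots> = (SUP n. (\<integral>\<^sup>+y. ennreal (h n y) \<partial>\<mu>))"
    by (rule nn_integral_monotone_convergence_SUP[OF inc2]) simp
  also have "\<dots> \<le> ennreal (a * B)" by (rule SUP_least) (rule outer)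
  finally have le: "(\<integral>\<^sup>+y. (\<integral>\<^sup>+x. ennreal \<bar>x - y\<bar> \<partial>\<mu>) \<partial>\<mu>) \<le> ennreal (a * B)" .
  have fin: "(\<integral>\<^sup>+y. (\<integral>\<^sup>+x. ennreal \<bar>x - y\<bar> \<partial>\<mu>) \<partial>\<mu>) \<noteq> \<infinity>"
  proof
    assume "(\<integral>\<^sup>+y. (\<integral>\<^sup>+x. ennreal \<bar>x - y\<bar> \<partial>\<mu>) \<partial>\<mu>) = \<infinity>"
    with le have "\<infinity> \<le> ennreal (a * B)" by simp
    then show False by (simp add: top_unique)
  qed
  have AEfin: "AE y in \<mu>. (\<integral>\<^sup>+x. ennreal \<bar>x - y\<bar> \<partial>\<mu>) \<noteq> \<infinity>"
    by (rule nn_integral_PInf_AE[OF _ fin]) measurable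
  have "\<exists>y. (\<integral>\<^sup>+x. ennreal \<bar>x - y\<bar> \<partial>\<mu>) \<noteq> \<infinity>"
  proof (rule ccontr)
    assume nex: "\<not> (\<exists>y. (\<integral>\<^sup>+x. ennreal \<bar>x - y\<bar> \<partial>\<mu>) \<noteq> \<infinity>)"
    have "AE y in \<mu>. False" using AEfin by eventually_elim (use nex in blast)
    then show False by (simp add: mu.AE_False)
  qed
  then obtain y where y: "(\<integral>\<^sup>+x. ennreal \<bar>x - y\<bar> \<partial>\<mu>) \<noteq> \<infinity>" by blast
  have "integrable \<mu> (\<lambda>x. x - y)"
    by (rule integrableI_bounded) (use y in \<open>auto simp: top.not_eq_extremum\<close>)
  then have "integrable \<mu> (\<lambda>x. (x - y) + y)" by (rule Bochner_Integration.integrable_add) simp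
  then have "integrable \<mu> (\<lambda>x. x)" by simp
  then show False using no_first_moment by simp
qed

end

lemma pow_card_prod:
  fixes z :: "'b::comm_monoid_mult"
  shows "finite T \<Longrightarrow> z ^ card {j\<in>T. P j} = (\<Prod>j\<in>T. if P j then z else 1)"
  by (simp add: prod.If_cases Int_def conj_commute)

context stbl
begin

definition Sset :: "real \<Rightarrow> 'a \<Rightarrow> int set" where
  "Sset L \<omega> = {j. X j t \<omega> + a * (real_of_int j - \<epsilon> \<omega>) \<in> {0..L}}"
definition NJ :: "nat \<Rightarrow> real \<Rightarrow> 'a \<Rightarrow> real" where
  "NJ J L \<omega> = real (card (Sset L \<omega> \<inter> TJ J))"

lemma count_N_eq: "count_N X \<epsilon> a t L \<omega> = real (card (Sset L \<omega>))"
  by (simp add: count_N_def Sset_def)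

lemma Sset_TJ: "Sset L \<omega> \<inter> TJ J = {j\<in>TJ J. X j t \<omega> + a * (real_of_int j - \<epsilon> \<omega>) \<in> {0..L}}"
  by (auto simp: Sset_def)

lemma NJ_sum: "NJ J L \<omega> = (\<Sum>j\<in>TJ J. if X j t \<omega> + a * (real_of_int j - \<epsilon> \<omega>) \<in> {0..L} then 1 else 0)"
  unfolding NJ_def Sset_TJ by (rule card_filter_sum) simp

lemma NJ_meas[measurable]: "NJ J L \<in> borel_measurable M"
  unfolding NJ_sum[abs_def] by measurable

lemma NJ_ge0: "0 \<le> NJ J L \<omega>" by (simp add: NJ_def)

lemma NJ_mono: "J \<le> J' \<Longrightarrow> NJ J L \<omega> \<le> NJ J' L \<omega>"
  unfolding NJ_def Sset_TJ by (simp only: of_nat_le_iff) (rule card_mono[OF finite_subset[OF _ finite_TJ[of J']]], auto simp: TJ_def)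

lemma NJ_le_card: "NJ J L \<omega> \<le> real (card (TJ J))"
  unfolding NJ_def by (simp only: of_nat_le_iff) (rule card_mono, auto)

lemma NJ_tendsto: "finite (Sset L \<omega>) \<Longrightarrow> (\<lambda>J. NJ J L \<omega>) \<longlonglongrightarrow> count_N X \<epsilon> a t L \<omega>"
  unfolding NJ_def count_N_eq by (rule card_TJ_tendsto)

lemma ind_int: "integrable M (\<lambda>\<omega>. if X j t \<omega> + a * (real_of_int j - e) \<in> {0..L} then 1 else (0::real))"
  by (rule integrable_const_bound[where B=1]) auto

lemma E_ind: "integral\<^sup>L M (\<lambda>\<omega>. if X j t \<omega> + a * (real_of_int j - e) \<in> {0..L} then 1 else (0::real)) = pj L e j"
proof -
  have "integral\<^sup>L M (\<lambda>\<omega>. (\<lambda>x. if x + a * (real_of_int j - e) \<in> {0..L} then 1 else (0::real)) (X j t \<omega>))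
     = integral\<^sup>L \<mu> (\<lambda>x. if x + a * (real_of_int j - e) \<in> {0..L} then 1 else (0::real))"
    by (rule integral_Xj) measurable
  then show ?thesis by (simp only: pj_int)
qed

lemma inner_E1:
  "integral\<^sup>L M (\<lambda>\<omega>. \<Sum>j\<in>T. if X j t \<omega> + a * (real_of_int j - e) \<in> {0..L} then 1 else (0::real)) = (\<Sum>j\<in>T. pj L e j)"
proof -
  have "integral\<^sup>L M (\<lambda>\<omega>. \<Sum>j\<in>T. if X j t \<omega> + a * (real_of_int j - e) \<in> {0..L} then 1 else (0::real))
     = (\<Sum>j\<in>T. integral\<^sup>L M (\<lambda>\<omega>. if X j t \<omega> + a * (real_of_int j - e) \<in> {0..L} then 1 else (0::real)))"
    by (rule Bochner_Integration.integral_sum) (rule ind_int)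
  also have "\<dots> = (\<Sum>j\<in>T. pj L e j)"
    by (intro sum.cong refl) (rule E_ind)
  finally show ?thesis .
qed

lemma E_NJ: "integral\<^sup>L M (NJ J L) = integral\<^sup>L U (mT (TJ J) L)"
proof -
  let ?T = "TJ J"
  let ?H = "\<lambda>e x. \<Sum>j\<in>?T. if x j + a * (real_of_int j - e) \<in> {0..L} then 1 else (0::real)"
  have "integral\<^sup>L M (NJ J L) = integral\<^sup>L M (\<lambda>\<omega>. ?H (\<epsilon> \<omega>) (\<lambda>j\<in>?T. X j t \<omega>))"
    by (intro Bochner_Integration.integral_cong refl) (simp add: NJ_sum)
  also have "\<dots> = integral\<^sup>L U (\<lambda>e. integral\<^sup>L M (\<lambda>\<omega>. ?H e (\<lambda>j\<in>?T. X j t \<omega>)))"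
  proof (rule cond_eps[where B="real (card ?T)"])
    show "norm (?H e x) \<le> real (card ?T)" for e x
    proof -
      have "norm (?H e x) \<le> (\<Sum>j\<in>?T. norm (if x j + a * (real_of_int j - e) \<in> {0..L} then 1 else (0::real)))"
        by (rule norm_sum)
      also have "\<dots> \<le> (\<Sum>j\<in>?T. 1)" by (intro sum_mono) auto
      finally show ?thesis by simp
    qed
  qed measurable
  also have "\<dots> = integral\<^sup>L U (mT (TJ J) L)"
  proof (intro Bochner_Integration.integral_cong refl)
    fix e
    have "(\<lambda>\<omega>. ?H e (\<lambda>j\<in>?T. X j t \<omega>)) = (\<lambda>\<omega>. \<Sum>j\<in>?T. if X j t \<omega> + a * (real_of_int j - e) \<in> {0..L} then 1 else (0::real))"
      by (auto intro!: sum.cong)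
    then show "integral\<^sup>L M (\<lambda>\<omega>. ?H e (\<lambda>j\<in>?T. X j t \<omega>)) = mT (TJ J) L e"
      by (simp only: inner_E1 mT_def)
  qed
  finally show ?thesis .
qed

lemma E_ind2:
  "integral\<^sup>L M (\<lambda>\<omega>. (if X j t \<omega> + a * (real_of_int j - e) \<in> {0..L} then 1 else (0::real)) *
      (if X k t \<omega> + a * (real_of_int k - e) \<in> {0..L} then 1 else (0::real)))
   = (if j = k then pj L e j else pj L e j * pj L e k)"
proof (cases "j = k")
  case True
  then show ?thesis using E_ind[of j e L] by (simp add: if_distrib cong: if_cong)
next
  case False
  let ?g = "\<lambda>i x. if x + a * (real_of_int i - e) \<in> {0..L} then 1 else (0::real)"
  have "integral\<^sup>L M (\<lambda>\<omega>. \<Prod>i\<in>{j, k}. ?g i (X i t \<omega>)) = (\<Prod>i\<in>{j, k}. integral\<^sup>L \<mu> (?g i))"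
    by (rule indep_prod[where B=1]) auto
  then show ?thesis using False by (simp add: pj_int)
qed

lemma inner_E2:
  assumes T: "finite T"
  shows "integral\<^sup>L M (\<lambda>\<omega>. (\<Sum>j\<in>T. if X j t \<omega> + a * (real_of_int j - e) \<in> {0..L} then 1 else (0::real))^2)
     = (\<Sum>j\<in>T. pj L e j)^2 + (\<Sum>j\<in>T. pj L e j) - (\<Sum>j\<in>T. (pj L e j)^2)"
proof -
  let ?I = "\<lambda>j \<omega>. if X j t \<omega> + a * (real_of_int j - e) \<in> {0..L} then 1 else (0::real)"
  have sq: "(\<Sum>j\<in>T. ?I j \<omega>)^2 = (\<Sum>j\<in>T. \<Sum>k\<in>T. ?I j \<omega> * ?I k \<omega>)" for \<omega>
    by (simp add: power2_eq_square sum_product)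
  have int2: "integrable M (\<lambda>\<omega>. ?I j \<omega> * ?I k \<omega>)" for j k
    by (rule integrable_const_bound[where B=1]) auto
  have "integral\<^sup>L M (\<lambda>\<omega>. (\<Sum>j\<in>T. ?I j \<omega>)^2) = integral\<^sup>L M (\<lambda>\<omega>. \<Sum>j\<in>T. \<Sum>k\<in>T. ?I j \<omega> * ?I k \<omega>)"
    by (simp only: sq)
  also have "\<dots> = (\<Sum>j\<in>T. integral\<^sup>L M (\<lambda>\<omega>. \<Sum>k\<in>T. ?I j \<omega> * ?I k \<omega>))"
    by (rule Bochner_Integration.integral_sum) (rule Bochner_Integration.integrable_sum, rule int2)
  also have "\<dots> = (\<Sum>j\<in>T. \<Sum>k\<in>T. integral\<^sup>L M (\<lambda>\<omega>. ?I j \<omega> * ?I k \<omega>))"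
    by (intro sum.cong refl Bochner_Integration.integral_sum int2)
  also have "\<dots> = (\<Sum>j\<in>T. \<Sum>k\<in>T. if j = k then pj L e j else pj L e j * pj L e k)"
    by (intro sum.cong refl E_ind2)
  also have "\<dots> = (\<Sum>j\<in>T. \<Sum>k\<in>T. pj L e j * pj L e k + (if j = k then pj L e j - (pj L e j)^2 else 0))"
    by (intro sum.cong refl) (auto simp: power2_eq_square)
  also have "\<dots> = (\<Sum>j\<in>T. pj L e j)^2 + (\<Sum>j\<in>T. pj L e j) - (\<Sum>j\<in>T. (pj L e j)^2)"
    using T by (simp add: sum.distrib power2_eq_square sum_product sum_subtractf)
  finally show ?thesis .
qed

lemma E_NJ2: "integral\<^sup>L M (\<lambda>\<omega>. (NJ J L \<omega>)^2) = integral\<^sup>L U (\<lambda>e. (mT (TJ J) L e)^2 + mT (TJ J) L e - qT (TJ J) L e)"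
proof -
  let ?T = "TJ J"
  let ?H = "\<lambda>e x. (\<Sum>j\<in>?T. if x j + a * (real_of_int j - e) \<in> {0..L} then 1 else (0::real))^2"
  have "integral\<^sup>L M (\<lambda>\<omega>. (NJ J L \<omega>)^2) = integral\<^sup>L M (\<lambda>\<omega>. ?H (\<epsilon> \<omega>) (\<lambda>j\<in>?T. X j t \<omega>))"
    by (intro Bochner_Integration.integral_cong refl) (simp add: NJ_sum)
  also have "\<dots> = integral\<^sup>L U (\<lambda>e. integral\<^sup>L M (\<lambda>\<omega>. ?H e (\<lambda>j\<in>?T. X j t \<omega>)))"
  proof (rule cond_eps[where B="(real (card ?T))^2"])
    show "norm (?H e x) \<le> (real (card ?T))^2" for e x
    proof -
      have "\<bar>\<Sum>j\<in>?T. if x j + a * (real_of_int j - e) \<in> {0..L} then 1 else (0::real)\<bar> \<le> (\<Sum>j\<in>?T. 1)"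
        by (rule order_trans[OF sum_abs]) (intro sum_mono, auto)
      then have "\<bar>\<Sum>j\<in>?T. if x j + a * (real_of_int j - e) \<in> {0..L} then 1 else (0::real)\<bar> \<le> real (card ?T)"
        by simp
      then have "\<bar>\<Sum>j\<in>?T. if x j + a * (real_of_int j - e) \<in> {0..L} then 1 else (0::real)\<bar>^2 \<le> (real (card ?T))^2"
        by (rule power_mono) simp
      then show ?thesis by simp
    qed
  qed measurable
  also have "\<dots> = integral\<^sup>L U (\<lambda>e. (mT (TJ J) L e)^2 + mT (TJ J) L e - qT (TJ J) L e)"
  proof (intro Bochner_Integration.integral_cong refl)
    fix e
    have "(\<lambda>\<omega>. ?H e (\<lambda>j\<in>?T. X j t \<omega>)) = (\<lambda>\<omega>. (\<Sum>j\<in>?T. if X j t \<omega> + a * (real_of_int j - e) \<in> {0..L} then 1 else (0::real))^2)"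
      by (intro ext arg_cong[where f="\<lambda>x. x^2"] sum.cong) auto
    then show "integral\<^sup>L M (\<lambda>\<omega>. ?H e (\<lambda>j\<in>?T. X j t \<omega>)) = (mT (TJ J) L e)^2 + mT (TJ J) L e - qT (TJ J) L e"
      by (simp only: inner_E2[OF finite_TJ] mT_def qT_def)
  qed
  finally show ?thesis .
qed

lemma inner_Ez:
  fixes z :: complex assumes z: "norm z \<le> 1"
  shows "integral\<^sup>L M (\<lambda>\<omega>. \<Prod>j\<in>T. if X j t \<omega> + a * (real_of_int j - e) \<in> {0..L} then z else 1)
    = (\<Prod>j\<in>T. 1 + pj L e j * (z - 1))"
proof (cases "finite T")
  case True
  let ?g = "\<lambda>j x. if x + a * (real_of_int j - e) \<in> {0..L} then z else 1"
  have "integral\<^sup>L M (\<lambda>\<omega>. \<Prod>j\<in>T. ?g j (X j t \<omega>)) = (\<Prod>j\<in>T. integral\<^sup>L \<mu> (?g j))"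
    by (rule indep_prod[OF True, where B=1]) (auto simp: z)
  also have "\<dots> = (\<Prod>j\<in>T. 1 + pj L e j * (z - 1))"
  proof (intro prod.cong refl)
    fix j
    have g: "?g j x = 1 + (z - 1) * complex_of_real (if x + a * (real_of_int j - e) \<in> {0..L} then 1 else 0)" for x
      by simp
    have ii: "integrable \<mu> (\<lambda>x. (z - 1) * complex_of_real (if x + a * (real_of_int j - e) \<in> {0..L} then 1 else 0))"
      by (rule mu.integrable_const_bound[where B="cmod (z - 1)"]) (auto simp: norm_mult)
    have "integral\<^sup>L \<mu> (?g j) = integral\<^sup>L \<mu> (\<lambda>x. 1 + (z - 1) * complex_of_real (if x + a * (real_of_int j - e) \<in> {0..L} then 1 else 0))"
      by (simp only: g)
    also have "\<dots> = 1 + (z - 1) * complex_of_real (pj L e j)"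
      by (subst Bochner_Integration.integral_add[OF _ ii]) (auto simp: pj_int mu.prob_space)
    finally show "integral\<^sup>L \<mu> (?g j) = 1 + pj L e j * (z - 1)" by (simp add: mult.commute)
  qed
  finally show ?thesis .
qed (simp add: prob_space)

lemma E_zN:
  fixes z :: complex assumes z: "norm z \<le> 1"
  shows "integral\<^sup>L M (\<lambda>\<omega>. z ^ card (Sset L \<omega> \<inter> TJ J)) = integral\<^sup>L U (\<lambda>e. \<Prod>j\<in>TJ J. 1 + pj L e j * (z - 1))"
proof -
  let ?T = "TJ J"
  let ?H = "\<lambda>e x. \<Prod>j\<in>?T. if x j + a * (real_of_int j - e) \<in> {0..L} then z else 1"
  have "integral\<^sup>L M (\<lambda>\<omega>. z ^ card (Sset L \<omega> \<inter> TJ J)) = integral\<^sup>L M (\<lambda>\<omega>. ?H (\<epsilon> \<omega>) (\<lambda>j\<in>?T. X j t \<omega>))"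
    by (intro Bochner_Integration.integral_cong refl) (simp add: Sset_TJ pow_card_prod)
  also have "\<dots> = integral\<^sup>L U (\<lambda>e. integral\<^sup>L M (\<lambda>\<omega>. ?H e (\<lambda>j\<in>?T. X j t \<omega>)))"
  proof (rule cond_eps[where B=1])
    show "norm (?H e x) \<le> 1" for e x
      by (simp add: prod_norm[symmetric] z prod_le_1)
  qed measurable
  also have "\<dots> = integral\<^sup>L U (\<lambda>e. \<Prod>j\<in>TJ J. 1 + pj L e j * (z - 1))"
  proof (intro Bochner_Integration.integral_cong refl)
    fix e
    have "(\<lambda>\<omega>. ?H e (\<lambda>j\<in>?T. X j t \<omega>)) = (\<lambda>\<omega>. \<Prod>j\<in>?T. if X j t \<omega> + a * (real_of_int j - e) \<in> {0..L} then z else 1)"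
      by (intro ext prod.cong) auto
    then show "integral\<^sup>L M (\<lambda>\<omega>. ?H e (\<lambda>j\<in>?T. X j t \<omega>)) = (\<Prod>j\<in>TJ J. 1 + pj L e j * (z - 1))"
      by (simp only: inner_Ez[OF z])
  qed
  finally show ?thesis .
qed

end

context stbl
begin

lemma U_UNIV[simp]: "measure U UNIV = 1" using UU.prob_space by simp

lemma mT_meas[measurable]: "mT (TJ J) L \<in> borel_measurable borel"
proof -
  have "mT (TJ J) L = (\<lambda>e. integral\<^sup>L \<mu> (\<lambda>x. cnt (TJ J) L e x))" by (simp add: mT_eq fun_eq_iff)
  moreover have "(\<lambda>e. integral\<^sup>L \<mu> (\<lambda>x. cnt (TJ J) L e x)) \<in> borel_measurable borel" by measurable
  ultimately show ?thesis by simp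
qed

lemma qT_meas[measurable]: "qT (TJ J) L \<in> borel_measurable borel"
proof -
  have "qT (TJ J) L = (\<lambda>e. integral\<^sup>L \<mu> (\<lambda>y. integral\<^sup>L \<mu> (\<lambda>x. cnt2 (TJ J) L e x y)))" by (simp add: qT_eq fun_eq_iff)
  moreover have "(\<lambda>e. integral\<^sup>L \<mu> (\<lambda>y. integral\<^sup>L \<mu> (\<lambda>x. cnt2 (TJ J) L e x y))) \<in> borel_measurable borel" by measurable
  ultimately show ?thesis by simp
qed

lemma mZ_meas[measurable]: "mZ L \<in> borel_measurable borel"
proof -
  have "mZ L = (\<lambda>e. integral\<^sup>L \<mu> (\<lambda>x. cntZ L e x))" by (simp add: mZ_def fun_eq_iff)
  moreover have "(\<lambda>e. integral\<^sup>L \<mu> (\<lambda>x. cntZ L e x)) \<in> borel_measurable borel" by measurable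
  ultimately show ?thesis by simp
qed

lemma qZ_meas[measurable]: "qZ L \<in> borel_measurable borel"
proof -
  have "qZ L = (\<lambda>e. integral\<^sup>L \<mu> (\<lambda>y. integral\<^sup>L \<mu> (\<lambda>x. cnt2Z L e x y)))" by (simp add: qZ_def fun_eq_iff)
  moreover have "(\<lambda>e. integral\<^sup>L \<mu> (\<lambda>y. integral\<^sup>L \<mu> (\<lambda>x. cnt2Z L e x y))) \<in> borel_measurable borel" by measurable
  ultimately show ?thesis by simp
qed

lemma mT_ge0: "0 \<le> mT T L e" unfolding mT_def by (intro sum_nonneg pj_ge0)

lemma qT_le_mT: "qT T L e \<le> mT T L e"
  unfolding qT_def mT_def
proof (intro sum_mono)
  fix j show "(pj L e j)^2 \<le> pj L e j" using pj_ge0[of L e j] pj_le1[of L e j]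
    by (simp add: power2_eq_square mult_left_le_one_le)
qed

lemma qT_ge0: "0 \<le> qT T L e" unfolding qT_def by (intro sum_nonneg) simp

lemma bounded_int_U:
  fixes f :: "real \<Rightarrow> real"
  assumes "f \<in> borel_measurable borel" "\<And>x. \<bar>f x\<bar> \<le> B"
  shows "integrable U f"
  by (rule UU.integrable_const_bound[where B=B]) (use assms in auto)

context
  fixes L :: real assumes L0: "0 \<le> L"
begin

lemma mT_le: "mT (TJ J) L e \<le> L / a + 1"
proof -
  have "\<bar>mT (TJ J) L e\<bar> \<le> L / a + 1" unfolding mT_eq
  proof (rule abs_integral_mu_le)
    show "\<bar>cnt (TJ J) L e x\<bar> \<le> L / a + 1" for x
      using cnt_le[OF L0, of "TJ J" e x] cnt_ge0[OF L0, of "TJ J" e x] by simp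
  qed measurable
  then show ?thesis by simp
qed

lemma qZ_le_mZ: "qZ L e \<le> mZ L e"
  using qT_tendsto[OF L0, of e] mT_tendsto[OF L0, of e] by (rule LIMSEQ_le) (auto intro: qT_le_mT)

lemma qZ_ge0: "0 \<le> qZ L e"
  using qT_tendsto[OF L0, of e] by (rule LIMSEQ_le_const) (auto intro: qT_ge0)

lemma E_NJ_le: "integral\<^sup>L M (NJ J L) \<le> L / a + 1"
proof -
  have "integral\<^sup>L U (mT (TJ J) L) \<le> integral\<^sup>L U (\<lambda>_. L / a + 1)"
    using a0 L0 by (intro integral_mono bounded_int_U[where B="L/a+1"]) (auto simp: mT_le mT_ge0 abs_le_iff)
  then show ?thesis by (simp add: E_NJ UU.prob_space)
qed

lemma NJ_int: "integrable M (NJ J L)"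
  by (rule integrable_const_bound[where B="real (card (TJ J))"]) (auto simp: NJ_ge0 NJ_le_card)

lemma AE_finite: "AE \<omega> in M. finite (Sset L \<omega>)"
proof -
  have inc: "incseq (\<lambda>J \<omega>. ennreal (NJ J L \<omega>))"
    by (intro incseq_SucI le_funI ennreal_leI NJ_mono) simp
  have "(\<integral>\<^sup>+\<omega>. (SUP J. ennreal (NJ J L \<omega>)) \<partial>M) = (SUP J. (\<integral>\<^sup>+\<omega>. ennreal (NJ J L \<omega>) \<partial>M))"
    by (rule nn_integral_monotone_convergence_SUP[OF inc]) simp
  also have "\<dots> \<le> ennreal (L / a + 1)"
  proof (rule SUP_least)
    fix J
    have "(\<integral>\<^sup>+\<omega>. ennreal (NJ J L \<omega>) \<partial>M) = ennreal (integral\<^sup>L M (NJ J L))"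
      by (rule nn_integral_eq_integral[OF NJ_int]) (simp add: NJ_ge0)
    also have "\<dots> \<le> ennreal (L / a + 1)" using E_NJ_le by (rule ennreal_leI)
    finally show "(\<integral>\<^sup>+\<omega>. ennreal (NJ J L \<omega>) \<partial>M) \<le> ennreal (L / a + 1)" .
  qed
  finally have le: "(\<integral>\<^sup>+\<omega>. (SUP J. ennreal (NJ J L \<omega>)) \<partial>M) \<le> ennreal (L / a + 1)" .
  have fin: "(\<integral>\<^sup>+\<omega>. (SUP J. ennreal (NJ J L \<omega>)) \<partial>M) \<noteq> \<infinity>"
  proof
    assume "(\<integral>\<^sup>+\<omega>. (SUP J. ennreal (NJ J L \<omega>)) \<partial>M) = \<infinity>"
    with le have "\<infinity> \<le> ennreal (L / a + 1)" by simp
    then show False by (simp add: top_unique)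
  qed
  have "AE \<omega> in M. (SUP J. ennreal (NJ J L \<omega>)) \<noteq> \<infinity>"
    by (rule nn_integral_PInf_AE[OF _ fin]) measurable
  then show ?thesis
  proof (rule AE_mp, intro AE_I2 impI)
    fix \<omega> assume ne: "(SUP J. ennreal (NJ J L \<omega>)) \<noteq> \<infinity>"
    show "finite (Sset L \<omega>)"
    proof (rule ccontr)
      assume inf: "infinite (Sset L \<omega>)"
      obtain r where r: "(SUP J. ennreal (NJ J L \<omega>)) = ennreal r" "0 \<le> r"
        using ne by (cases "(SUP J. ennreal (NJ J L \<omega>))") auto
      obtain J where J: "real (card (Sset L \<omega> \<inter> TJ J)) > r"
        using infinite_card_TJ_unbounded[OF inf] by blast
      have "ennreal (NJ J L \<omega>) \<le> ennreal r" unfolding r(1)[symmetric] by (rule SUP_upper) simp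
      then have "NJ J L \<omega> \<le> r" using r(2) by (simp add: ennreal_le_iff)
      then show False using J unfolding NJ_def by simp
    qed
  qed
qed

end

lemma finite_iff_bounded: "finite (Sset L \<omega>) \<longleftrightarrow> (\<exists>B::nat. \<forall>J. NJ J L \<omega> \<le> real B)"
proof
  assume fin: "finite (Sset L \<omega>)"
  show "\<exists>B::nat. \<forall>J. NJ J L \<omega> \<le> real B"
    by (intro exI[of _ "card (Sset L \<omega>)"] allI) (simp add: NJ_def card_mono fin)
next
  assume "\<exists>B::nat. \<forall>J. NJ J L \<omega> \<le> real B"
  then obtain B :: nat where B: "\<forall>J. NJ J L \<omega> \<le> real B" by blast
  show "finite (Sset L \<omega>)"
  proof (rule ccontr)
    assume "infinite (Sset L \<omega>)"
    from infinite_card_TJ_unbounded[OF this, of "real B"] obtain J where "real (card (Sset L \<omega> \<inter> TJ J)) > real B" by blast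
    then show False using B[rule_format, of J] unfolding NJ_def by simp
  qed
qed

lemma count_N_meas[measurable]: "count_N X \<epsilon> a t L \<in> borel_measurable M"
proof -
  let ?P = "\<lambda>\<omega>. \<exists>B::nat. \<forall>J. NJ J L \<omega> \<le> real B"
  have Pm[measurable]: "Measurable.pred M ?P" by measurable
  let ?u = "\<lambda>J \<omega>. if ?P \<omega> then NJ J L \<omega> else 0"
  show ?thesis
  proof (rule borel_measurable_LIMSEQ_real[where u="?u"])
    fix \<omega> assume "\<omega> \<in> space M"
    show "(\<lambda>J. ?u J \<omega>) \<longlonglongrightarrow> count_N X \<epsilon> a t L \<omega>"
    proof (cases "?P \<omega>")
      case True
      then have "finite (Sset L \<omega>)" using finite_iff_bounded by blast
      then show ?thesis using True NJ_tendsto by simp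
    next
      case False
      then have "infinite (Sset L \<omega>)" using finite_iff_bounded by blast
      have "(\<lambda>J. ?u J \<omega>) = (\<lambda>_. 0)" by (rule ext) (rule if_not_P[OF False])
      then show ?thesis using \<open>infinite (Sset L \<omega>)\<close> by (simp add: count_N_eq)
    qed
  qed measurable
qed

end

context stbl
begin

context
  fixes L :: real assumes L0: "0 \<le> L"
begin

lemma mT_abs: "\<bar>mT (TJ J) L e\<bar> \<le> L / a + 1"
  using mT_le[OF L0] mT_ge0 by (simp add: abs_le_iff)

lemma E_mT_tendsto: "(\<lambda>J. integral\<^sup>L U (mT (TJ J) L)) \<longlonglongrightarrow> integral\<^sup>L U (mZ L)"
proof (rule integral_dominated_convergence[where w="\<lambda>_. L / a + 1"])
  show "AE e in U. (\<lambda>J. mT (TJ J) L e) \<longlonglongrightarrow> mZ L e" by (simp add: mT_tendsto[OF L0])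
  show "AE e in U. norm (mT (TJ J) L e) \<le> L / a + 1" for J using mT_abs by simp
qed auto

lemma EN: "integrable M (count_N X \<epsilon> a t L)" "integral\<^sup>L M (count_N X \<epsilon> a t L) = integral\<^sup>L U (mZ L)"
proof -
  have mono: "AE \<omega> in M. mono (\<lambda>J. NJ J L \<omega>)"
    by (intro AE_I2 monoI NJ_mono)
  have lim: "AE \<omega> in M. (\<lambda>J. NJ J L \<omega>) \<longlonglongrightarrow> count_N X \<epsilon> a t L \<omega>"
    using AE_finite[OF L0] by eventually_elim (rule NJ_tendsto)
  have ilim: "(\<lambda>J. integral\<^sup>L M (NJ J L)) \<longlonglongrightarrow> integral\<^sup>L U (mZ L)"
    unfolding E_NJ by (rule E_mT_tendsto)
  show "integrable M (count_N X \<epsilon> a t L)"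
    by (rule integral_monotone_convergence_nonneg(1)[OF NJ_int[OF L0] mono _ lim ilim]) (auto simp: NJ_ge0)
  show "integral\<^sup>L M (count_N X \<epsilon> a t L) = integral\<^sup>L U (mZ L)"
    by (rule integral_monotone_convergence_nonneg(2)[OF NJ_int[OF L0] mono _ lim ilim]) (auto simp: NJ_ge0)
qed

lemma E_sq_tendsto: "(\<lambda>J. integral\<^sup>L U (\<lambda>e. (mT (TJ J) L e)^2 + mT (TJ J) L e - qT (TJ J) L e))
   \<longlonglongrightarrow> integral\<^sup>L U (\<lambda>e. (mZ L e)^2 + mZ L e - qZ L e)"
proof (rule integral_dominated_convergence[where w="\<lambda>_. (L / a + 1)^2 + (L / a + 1)"])
  show "AE e in U. (\<lambda>J. (mT (TJ J) L e)^2 + mT (TJ J) L e - qT (TJ J) L e) \<longlonglongrightarrow> (mZ L e)^2 + mZ L e - qZ L e"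
    by (intro AE_I2 tendsto_intros mT_tendsto[OF L0] qT_tendsto[OF L0])
  show "AE e in U. norm ((mT (TJ J) L e)^2 + mT (TJ J) L e - qT (TJ J) L e) \<le> (L / a + 1)^2 + (L / a + 1)" for J
  proof (rule AE_I2)
    fix e
    have m0: "0 \<le> mT (TJ J) L e" by (rule mT_ge0)
    have m1: "mT (TJ J) L e \<le> L / a + 1" by (rule mT_le[OF L0])
    have q: "0 \<le> qT (TJ J) L e" "qT (TJ J) L e \<le> mT (TJ J) L e" by (rule qT_ge0, rule qT_le_mT)
    have sq: "(mT (TJ J) L e)^2 \<le> (L / a + 1)^2" using m1 m0 by (rule power_mono)
    have sq0: "0 \<le> (mT (TJ J) L e)^2" by simp
    show "norm ((mT (TJ J) L e)^2 + mT (TJ J) L e - qT (TJ J) L e) \<le> (L / a + 1)^2 + (L / a + 1)"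
      unfolding real_norm_def abs_le_iff using sq sq0 m0 m1 q by (intro conjI) linarith+
  qed
qed auto

lemma EN2: "integrable M (\<lambda>\<omega>. (count_N X \<epsilon> a t L \<omega>)^2)"
  "integral\<^sup>L M (\<lambda>\<omega>. (count_N X \<epsilon> a t L \<omega>)^2) = integral\<^sup>L U (\<lambda>e. (mZ L e)^2 + mZ L e - qZ L e)"
proof -
  have int: "integrable M (\<lambda>\<omega>. (NJ J L \<omega>)^2)" for J
    by (rule integrable_const_bound[where B="(real (card (TJ J)))^2"])
       (auto simp: NJ_ge0 NJ_le_card power_mono)
  have mono: "AE \<omega> in M. mono (\<lambda>J. (NJ J L \<omega>)^2)"
    by (intro AE_I2 monoI power_mono NJ_mono NJ_ge0)
  have lim: "AE \<omega> in M. (\<lambda>J. (NJ J L \<omega>)^2) \<longlonglongrightarrow> (count_N X \<epsilon> a t L \<omega>)^2"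
    using AE_finite[OF L0] by eventually_elim (intro tendsto_intros NJ_tendsto)
  have ilim: "(\<lambda>J. integral\<^sup>L M (\<lambda>\<omega>. (NJ J L \<omega>)^2)) \<longlonglongrightarrow> integral\<^sup>L U (\<lambda>e. (mZ L e)^2 + mZ L e - qZ L e)"
    unfolding E_NJ2 by (rule E_sq_tendsto)
  show "integrable M (\<lambda>\<omega>. (count_N X \<epsilon> a t L \<omega>)^2)"
    by (rule integral_monotone_convergence_nonneg(1)[OF int mono _ lim ilim]) auto
  show "integral\<^sup>L M (\<lambda>\<omega>. (count_N X \<epsilon> a t L \<omega>)^2) = integral\<^sup>L U (\<lambda>e. (mZ L e)^2 + mZ L e - qZ L e)"
    by (rule integral_monotone_convergence_nonneg(2)[OF int mono _ lim ilim]) auto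
qed

lemma Var_eq: "number_variance M X \<epsilon> a t L
   = integral\<^sup>L U (\<lambda>e. (mZ L e)^2 + mZ L e - qZ L e) - (integral\<^sup>L U (mZ L))^2"
proof -
  have "number_variance M X \<epsilon> a t L = variance (count_N X \<epsilon> a t L)"
    unfolding number_variance_def ..
  also have "\<dots> = expectation (\<lambda>\<omega>. (count_N X \<epsilon> a t L \<omega>)^2) - (expectation (count_N X \<epsilon> a t L))^2"
    by (rule variance_eq[OF EN(1) EN2(1)])
  finally show ?thesis by (simp only: EN(2) EN2(2))
qed

lemma char_lim:
  "(\<lambda>J. integral\<^sup>L U (\<lambda>e. \<Prod>j\<in>TJ J. 1 + pj L e j * (iexp u - 1)))
     \<longlonglongrightarrow> integral\<^sup>L M (\<lambda>\<omega>. iexp (u * count_N X \<epsilon> a t L \<omega>))"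
proof -
  have pw: "iexp u ^ card (Sset L \<omega> \<inter> TJ J) = iexp (u * NJ J L \<omega>)" for \<omega> J
  proof -
    have "iexp (u * NJ J L \<omega>) = exp (of_nat (card (Sset L \<omega> \<inter> TJ J)) * (\<i> * complex_of_real u))"
      unfolding NJ_def by (simp add: algebra_simps)
    also have "\<dots> = iexp u ^ card (Sset L \<omega> \<inter> TJ J)" by (rule exp_of_nat_mult)
    finally show ?thesis ..
  qed
  have eq: "integral\<^sup>L U (\<lambda>e. \<Prod>j\<in>TJ J. 1 + pj L e j * (iexp u - 1)) = integral\<^sup>L M (\<lambda>\<omega>. iexp (u * NJ J L \<omega>))" for J
    using E_zN[of "iexp u" L J] by (simp add: pw)
  show ?thesis unfolding eq
  proof (rule integral_dominated_convergence[where w="\<lambda>_. 1"])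
    show "AE \<omega> in M. (\<lambda>J. iexp (u * NJ J L \<omega>)) \<longlonglongrightarrow> iexp (u * count_N X \<epsilon> a t L \<omega>)"
      using AE_finite[OF L0] by eventually_elim (intro tendsto_intros NJ_tendsto)
    show "AE \<omega> in M. norm (iexp (u * NJ J L \<omega>)) \<le> 1" for J by simp
  qed auto
qed

end

end

lemma norm_bern_le1: "0 \<le> p \<Longrightarrow> p \<le> 1 \<Longrightarrow> cmod (1 + complex_of_real p * (iexp u - 1)) \<le> 1"
proof -
  assume p: "0 \<le> p" "p \<le> 1"
  have "1 + complex_of_real p * (iexp u - 1) = complex_of_real (1 - p) + complex_of_real p * iexp u"
    by (simp add: algebra_simps)
  also have "cmod \<dots> \<le> cmod (complex_of_real (1 - p)) + cmod (complex_of_real p * iexp u)"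
    by (rule norm_triangle_ineq)
  also have "\<dots> = (1 - p) + p"
  proof -
    have "cmod (complex_of_real (1 - p)) = 1 - p" using p by (simp only: norm_of_real)
    moreover have "cmod (complex_of_real p * iexp u) = p" using p by (simp add: norm_mult)
    ultimately show ?thesis by simp
  qed
  finally show ?thesis by simp
qed

lemma prod_bern_bound:
  fixes p :: "int \<Rightarrow> real"
  assumes T: "finite T" and p: "\<And>j. 0 \<le> p j" "\<And>j. p j \<le> 1" and u: "\<bar>u\<bar> \<le> 1"
  shows "cmod ((\<Prod>j\<in>T. 1 + p j * (iexp u - 1)) * iexp (- (u * (\<Sum>j\<in>T. p j)))
            - exp (- (u^2 * (\<Sum>j\<in>T. p j * (1 - p j)) / 2)))
         \<le> \<bar>u\<bar>^3 * (\<Sum>j\<in>T. p j * (1 - p j))"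
proof -
  let ?A = "\<lambda>j. (1 + p j * (iexp u - 1)) * iexp (- (u * p j))"
  let ?B = "\<lambda>j. complex_of_real (exp (- (u^2 * (p j * (1 - p j)) / 2)))"
  have e1: "(\<Prod>j\<in>T. 1 + p j * (iexp u - 1)) * iexp (- (u * (\<Sum>j\<in>T. p j))) = (\<Prod>j\<in>T. ?A j)"
  proof -
    have "iexp (- (u * (\<Sum>j\<in>T. p j))) = (\<Prod>j\<in>T. iexp (- (u * p j)))"
      using T by (simp add: exp_sum[symmetric] sum_negf sum_distrib_left)
    then show ?thesis by (simp add: prod.distrib)
  qed
  have e2: "complex_of_real (exp (- (u^2 * (\<Sum>j\<in>T. p j * (1 - p j)) / 2))) = (\<Prod>j\<in>T. ?B j)"
  proof -
    have "exp (- (u^2 * (\<Sum>j\<in>T. p j * (1 - p j)) / 2)) = (\<Prod>j\<in>T. exp (- (u^2 * (p j * (1 - p j)) / 2)))"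
      using T by (simp add: exp_sum[symmetric] sum_negf sum_distrib_left sum_divide_distrib)
    then show ?thesis by simp
  qed
  have "cmod ((\<Prod>j\<in>T. ?A j) - (\<Prod>j\<in>T. ?B j)) \<le> (\<Sum>j\<in>T. cmod (?A j - ?B j))"
  proof (rule norm_prod_diff)
    fix j show "cmod (?A j) \<le> 1" using norm_bern_le1[OF p(1)[of j] p(2)[of j], of u] by (simp add: norm_mult)
    show "cmod (?B j) \<le> 1" using p(1)[of j] p(2)[of j] by simp
  qed
  also have "\<dots> \<le> (\<Sum>j\<in>T. \<bar>u\<bar>^3 * (p j * (1 - p j)))"
    by (intro sum_mono bern_factor_bound p u)
  finally show ?thesis unfolding e1 using e2 by (simp add: sum_distrib_left)
qed

lemma exp_neg_lipschitz:
  fixes x y :: real assumes "0 \<le> x" "0 \<le> y"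
  shows "\<bar>exp (- x) - exp (- y)\<bar> \<le> \<bar>x - y\<bar>"
proof -
  have *: "exp (- x) - exp (- y) \<le> y - x" if "0 \<le> x" "x \<le> y" for x y :: real
  proof -
    have "exp (- x) - exp (- y) = exp (- x) * (1 - exp (- (y - x)))"
      by (simp add: algebra_simps flip: exp_add)
    also have "\<dots> \<le> 1 * (1 - exp (- (y - x)))"
      using that by (intro mult_right_mono) auto
    also have "\<dots> \<le> y - x"
    proof -
      have "1 + (x - y) \<le> exp (x - y)" by (rule exp_ge_add_one_self)
      then show ?thesis by (simp add: algebra_simps)
    qed
    finally show ?thesis .
  qed
  show ?thesis
  proof (cases "x \<le> y")
    case True
    then have "exp (- y) \<le> exp (- x)" by simp
    then show ?thesis using *[OF assms(1) True] True by simp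
  next
    case False
    then have "exp (- x) \<le> exp (- y)" by simp
    then show ?thesis using *[OF assms(2), of x] False by simp
  qed
qed

lemma pointwise_bound:
  fixes p :: "int \<Rightarrow> real" and K \<theta> u :: real
  assumes T: "finite T" and p: "\<And>j. 0 \<le> p j" "\<And>j. p j \<le> 1" and u: "\<bar>u\<bar> \<le> 1"
  defines "m \<equiv> (\<Sum>j\<in>T. p j)" and "s \<equiv> (\<Sum>j\<in>T. p j * (1 - p j))"
  shows "cmod (iexp (- (u * K)) * (\<Prod>j\<in>T. 1 + p j * (iexp u - 1)) - exp (- (\<theta>^2 / 2)))
     \<le> \<bar>u\<bar>^3 * s + \<bar>u\<bar> * \<bar>m - K\<bar> + \<bar>u^2 * s - \<theta>^2\<bar> / 2"
proof -
  let ?P = "\<Prod>j\<in>T. 1 + p j * (iexp u - 1)"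
  let ?Eu = "complex_of_real (exp (- (u^2 * s / 2)))"
  let ?Ei = "complex_of_real (exp (- (\<theta>^2 / 2)))"
  have s0: "0 \<le> s" unfolding s_def using p by (intro sum_nonneg) simp
  have A: "cmod (?P * iexp (- (u * m)) - ?Eu) \<le> \<bar>u\<bar>^3 * s"
    unfolding m_def s_def by (rule prod_bern_bound[OF T p u])
  have split: "iexp (- (u * K)) * ?P - ?Ei
     = iexp (u * (m - K)) * (?P * iexp (- (u * m)) - ?Eu) + (iexp (u * (m - K)) - 1) * ?Eu + (?Eu - ?Ei)"
  proof -
    have "iexp (u * (m - K)) * iexp (- (u * m)) = iexp (- (u * K))"
      by (simp add: algebra_simps flip: exp_add)
    then show ?thesis by (simp add: algebra_simps)
  qed
  have n1: "cmod (iexp (u * (m - K)) * (?P * iexp (- (u * m)) - ?Eu)) \<le> \<bar>u\<bar>^3 * s"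
    using A by (simp add: norm_mult)
  have n2: "cmod ((iexp (u * (m - K)) - 1) * ?Eu) \<le> \<bar>u\<bar> * \<bar>m - K\<bar>"
  proof -
    have "cmod (iexp (u * (m - K)) - iexp 0) \<le> \<bar>u * (m - K) - 0\<bar>" by (rule iexp_diff_le)
    moreover have "cmod ?Eu \<le> 1"
    proof -
      have "0 \<le> u^2 * s" using s0 by (intro mult_nonneg_nonneg) auto
      then show ?thesis by simp
    qed
    ultimately have "cmod (iexp (u * (m - K)) - 1) * cmod ?Eu \<le> \<bar>u * (m - K)\<bar> * 1"
      by (intro mult_mono) auto
    then show ?thesis by (simp add: norm_mult abs_mult)
  qed
  have n3: "cmod (?Eu - ?Ei) \<le> \<bar>u^2 * s - \<theta>^2\<bar> / 2"
  proof -
    have "cmod (?Eu - ?Ei) = \<bar>exp (- (u^2 * s / 2)) - exp (- (\<theta>^2 / 2))\<bar>"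
      by (metis norm_of_real of_real_diff)
    also have "\<dots> \<le> \<bar>u^2 * s / 2 - \<theta>^2 / 2\<bar>" proof (rule exp_neg_lipschitz)
      have "0 \<le> u^2 * s" using s0 by (intro mult_nonneg_nonneg) auto
      then show "0 \<le> u^2 * s / 2" by simp
    qed simp
    also have "\<dots> = \<bar>u^2 * s - \<theta>^2\<bar> / 2" by (simp add: diff_divide_distrib[symmetric])
    finally show ?thesis .
  qed
  have "cmod (iexp (- (u * K)) * ?P - ?Ei) \<le> cmod (iexp (u * (m - K)) * (?P * iexp (- (u * m)) - ?Eu))
      + cmod ((iexp (u * (m - K)) - 1) * ?Eu) + cmod (?Eu - ?Ei)"
    unfolding split by (rule order_trans[OF norm_triangle_ineq add_right_mono[OF norm_triangle_ineq]])
  also have "\<dots> \<le> \<bar>u\<bar>^3 * s + \<bar>u\<bar> * \<bar>m - K\<bar> + \<bar>u^2 * s - \<theta>^2\<bar> / 2"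
    using n1 n2 n3 by linarith
  finally show ?thesis .
qed

context stbl
begin

lemma pj_meas[measurable]: "(\<lambda>e. pj L e j) \<in> borel_measurable borel"
proof -
  have "(\<lambda>e. pj L e j) = (\<lambda>e. integral\<^sup>L \<mu> (\<lambda>x. if x + a * (real_of_int j - e) \<in> {0..L} then 1 else (0::real)))"
    by (simp add: pj_int)
  moreover have "\<dots> \<in> borel_measurable borel" by measurable
  ultimately show ?thesis by simp
qed

lemma sum_pq: "(\<Sum>j\<in>T. pj L e j * (1 - pj L e j)) = mT T L e - qT T L e"
  by (simp add: mT_def qT_def power2_eq_square algebra_simps sum_subtractf)

lemma var_bound_U:
  fixes f :: "real \<Rightarrow> real"
  assumes [measurable]: "f \<in> borel_measurable borel" and fK: "\<And>e. \<bar>f e - K\<bar> \<le> 1"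
  shows "0 \<le> integral\<^sup>L U (\<lambda>e. (f e)^2) - (integral\<^sup>L U f)^2"
    "integral\<^sup>L U (\<lambda>e. (f e)^2) - (integral\<^sup>L U f)^2 \<le> 1"
proof -
  have fb: "\<bar>f e\<bar> \<le> \<bar>K\<bar> + 1" for e using fK[of e] by linarith
  have i1: "integrable U f" by (rule bounded_int_U[OF _ fb]) simp
  have i2: "integrable U (\<lambda>e. (f e)^2)"
  proof (rule bounded_int_U[where B="(\<bar>K\<bar> + 1)^2"])
    show "\<bar>(f e)^2\<bar> \<le> (\<bar>K\<bar> + 1)^2" for e
      using power_mono[OF fb[of e] abs_ge_zero, of 2] by simp
  qed simp
  let ?c = "integral\<^sup>L U f"
  have eq: "integral\<^sup>L U (\<lambda>e. (f e - b)^2) = integral\<^sup>L U (\<lambda>e. (f e)^2) - 2 * b * ?c + b^2" for b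
  proof -
    have "(\<lambda>e. (f e - b)^2) = (\<lambda>e. (f e)^2 - (2 * b) * f e + b^2)"
      by (simp add: power2_eq_square algebra_simps)
    moreover have "integral\<^sup>L U (\<lambda>e. (f e)^2 - (2 * b) * f e + b^2) = integral\<^sup>L U (\<lambda>e. (f e)^2) - 2 * b * ?c + b^2"
      using i1 i2 by (simp add: UU.prob_space)
    ultimately show ?thesis by simp
  qed
  have "0 \<le> integral\<^sup>L U (\<lambda>e. (f e - ?c)^2)" by (intro integral_nonneg_AE) simp
  then show "0 \<le> integral\<^sup>L U (\<lambda>e. (f e)^2) - ?c^2" unfolding eq by (simp add: power2_eq_square)
  have "integral\<^sup>L U (\<lambda>e. (f e - K)^2) \<le> integral\<^sup>L U (\<lambda>e. 1)"
  proof (rule integral_mono)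
    show "integrable U (\<lambda>e. (f e - K)^2)"
    proof (rule bounded_int_U[where B=1])
      show "\<bar>(f e - K)^2\<bar> \<le> 1" for e
        using power_mono[OF fK[of e] abs_ge_zero, of 2] by simp
    qed simp
    show "(f e - K)^2 \<le> 1" for e using power_mono[OF fK[of e] abs_ge_zero, of 2] by simp
  qed simp
  then have "integral\<^sup>L U (\<lambda>e. (f e)^2) - 2 * K * ?c + K^2 \<le> 1" unfolding eq by simp
  moreover have "0 \<le> (?c - K)^2" by simp
  ultimately show "integral\<^sup>L U (\<lambda>e. (f e)^2) - ?c^2 \<le> 1"
    by (simp add: power2_eq_square algebra_simps)
qed

context
  fixes L :: real assumes L0: "0 \<le> L"
begin

lemma sigma_Wf: "\<bar>(mZ L e - qZ L e) - Wf L\<bar> \<le> 2"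
  using mZ_bounds[OF L0, of e] qZ_Gf[OF L0, of e] unfolding Wf_def by (simp add: abs_le_iff)

lemma La0: "0 \<le> L / a" using L0 a0 by simp

lemma mZ_abs: "\<bar>mZ L e\<bar> \<le> L / a + 1" using mZ_bounds[OF L0, of e] La0 by (simp add: abs_le_iff)

lemma mZ_int: "integrable U (mZ L)"
  by (rule bounded_int_U[where B="L/a+1"]) (use mZ_abs in auto)

lemma qZ_int: "integrable U (qZ L)"
proof (rule bounded_int_U[where B="L/a+1"])
  show "\<bar>qZ L e\<bar> \<le> L / a + 1" for e using qZ_ge0[OF L0, of e] qZ_le_mZ[OF L0, of e] mZ_bounds[OF L0, of e] by simp
qed simp

lemma V_bounds: "Wf L - 2 \<le> number_variance M X \<epsilon> a t L" "number_variance M X \<epsilon> a t L \<le> Wf L + 3"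
proof -
  have fK: "\<bar>mZ L e - L / a\<bar> \<le> 1" for e using mZ_bounds[OF L0, of e] by (simp add: abs_le_iff)
  note D = var_bound_U[OF mZ_meas fK]
  have i2: "integrable U (\<lambda>e. (mZ L e)^2)"
  proof (rule bounded_int_U[where B="(L/a+1)^2"])
    show "\<bar>(mZ L e)^2\<bar> \<le> (L/a+1)^2" for e
    proof -
      have "\<bar>mZ L e\<bar> \<le> L/a+1" by (rule mZ_abs)
      from power_mono[OF this abs_ge_zero, of 2] show ?thesis by simp
    qed
  qed simp
  have V: "number_variance M X \<epsilon> a t L = integral\<^sup>L U (\<lambda>e. mZ L e - qZ L e) + (integral\<^sup>L U (\<lambda>e. (mZ L e)^2) - (integral\<^sup>L U (mZ L))^2)"
    unfolding Var_eq[OF L0] using mZ_int qZ_int i2 by simp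
  have s1: "integral\<^sup>L U (\<lambda>e. mZ L e - qZ L e) \<le> Wf L + 2"
  proof -
    have "integral\<^sup>L U (\<lambda>e. mZ L e - qZ L e) \<le> integral\<^sup>L U (\<lambda>e. Wf L + 2)"
    proof (rule integral_mono)
      show "mZ L e - qZ L e \<le> Wf L + 2" for e using sigma_Wf[of e] by (simp add: abs_le_iff)
    qed (use mZ_int qZ_int in auto)
    then show ?thesis by simp
  qed
  have s2: "Wf L - 2 \<le> integral\<^sup>L U (\<lambda>e. mZ L e - qZ L e)"
  proof -
    have "integral\<^sup>L U (\<lambda>e. Wf L - 2) \<le> integral\<^sup>L U (\<lambda>e. mZ L e - qZ L e)"
    proof (rule integral_mono)
      show "Wf L - 2 \<le> mZ L e - qZ L e" for e using sigma_Wf[of e] by (simp add: abs_le_iff)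
    qed (use mZ_int qZ_int in auto)
    then show ?thesis by simp
  qed
  show "Wf L - 2 \<le> number_variance M X \<epsilon> a t L" using V s2 D(1) by linarith
  show "number_variance M X \<epsilon> a t L \<le> Wf L + 3" using V s1 D(2) by linarith
qed

lemma sigma_V: "\<bar>(mZ L e - qZ L e) - number_variance M X \<epsilon> a t L\<bar> \<le> 5"
  using sigma_Wf[of e] V_bounds by (simp add: abs_le_iff)

end

end

context stbl
begin

lemma char_est:
  fixes L \<theta> :: real
  assumes L0: "0 \<le> L" and Vpos: "0 < number_variance M X \<epsilon> a t L"
    and u1: "\<bar>\<theta> / sqrt (number_variance M X \<epsilon> a t L)\<bar> \<le> 1"
  defines "Vv \<equiv> number_variance M X \<epsilon> a t L"
  defines "u \<equiv> \<theta> / sqrt Vv"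
  shows "cmod (char (distr M borel (\<lambda>\<omega>. (count_N X \<epsilon> a t L \<omega> - L / a) / sqrt Vv)) \<theta> - exp (- (\<theta>^2 / 2)))
    \<le> \<bar>u\<bar>^3 * (Vv + 5) + \<bar>u\<bar> + 5 * u^2 / 2"
proof -
  let ?N = "count_N X \<epsilon> a t L"
  let ?K = "L / a"
  let ?E = "complex_of_real (exp (- (\<theta>^2 / 2)))"
  let ?Phi = "\<lambda>J e. \<Prod>j\<in>TJ J. 1 + complex_of_real (pj L e j) * (iexp u - 1)"
  have V0: "0 < Vv" using Vpos unfolding Vv_def .
  have u: "\<bar>u\<bar> \<le> 1" using u1 unfolding u_def Vv_def .
  have th: "\<theta>^2 = u^2 * Vv" unfolding u_def using V0 by (simp add: power_divide)
  have K0: "0 \<le> ?K" using L0 a0 by simp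
  have ch: "char (distr M borel (\<lambda>\<omega>. (?N \<omega> - ?K) / sqrt Vv)) \<theta> = iexp (- (u * ?K)) * integral\<^sup>L M (\<lambda>\<omega>. iexp (u * ?N \<omega>))"
  proof -
    have "char (distr M borel (\<lambda>\<omega>. (?N \<omega> - ?K) / sqrt Vv)) \<theta> = integral\<^sup>L M (\<lambda>\<omega>. iexp (\<theta> * ((?N \<omega> - ?K) / sqrt Vv)))"
      unfolding char_def by (subst integral_distr) auto
    also have "\<dots> = integral\<^sup>L M (\<lambda>\<omega>. iexp (- (u * ?K)) * iexp (u * ?N \<omega>))"
    proof (intro Bochner_Integration.integral_cong refl)
      fix \<omega>
      have "\<theta> * ((?N \<omega> - ?K) / sqrt Vv) = - (u * ?K) + u * ?N \<omega>" proof -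
        have "sqrt Vv \<noteq> 0" using V0 by simp
        then show ?thesis unfolding u_def using a0 by (simp add: field_simps)
      qed
      then show "iexp (\<theta> * ((?N \<omega> - ?K) / sqrt Vv)) = iexp (- (u * ?K)) * iexp (u * ?N \<omega>)"
      proof -
        have "iexp (- (u * ?K)) * iexp (u * ?N \<omega>) = iexp (- (u * ?K) + u * ?N \<omega>)"
          by (simp add: algebra_simps flip: exp_add)
        with \<open>\<theta> * ((?N \<omega> - ?K) / sqrt Vv) = - (u * ?K) + u * ?N \<omega>\<close> show ?thesis by simp
      qed
    qed
    also have "\<dots> = iexp (- (u * ?K)) * integral\<^sup>L M (\<lambda>\<omega>. iexp (u * ?N \<omega>))" by simp
    finally show ?thesis .
  qed
  have Phim[measurable]: "?Phi J \<in> borel_measurable borel" for J by measurable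
  have Phib: "cmod (?Phi J e) \<le> 1" for J e
    by (simp add: prod_norm[symmetric] prod_le_1 norm_bern_le1 pj_ge0 pj_le1)
  have Phii: "integrable U (?Phi J)" for J
    by (rule UU.integrable_const_bound[where B=1]) (auto simp: Phib)
  define G where "G J = integral\<^sup>L U (\<lambda>e. iexp (- (u * ?K)) * ?Phi J e - ?E)" for J
  have G: "G J = iexp (- (u * ?K)) * integral\<^sup>L U (?Phi J) - ?E" for J
    unfolding G_def using Phii[of J] by (simp add: UU.prob_space)
  have Glim: "(\<lambda>J. G J) \<longlonglongrightarrow> char (distr M borel (\<lambda>\<omega>. (?N \<omega> - ?K) / sqrt Vv)) \<theta> - ?E"
    unfolding G ch by (intro tendsto_intros char_lim[OF L0])
  define b where "b J e = \<bar>u\<bar>^3 * (mT (TJ J) L e - qT (TJ J) L e) + \<bar>u\<bar> * \<bar>mT (TJ J) L e - ?K\<bar>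
     + \<bar>u^2 * (mT (TJ J) L e - qT (TJ J) L e) - \<theta>^2\<bar> / 2" for J e
  define binf where "binf e = \<bar>u\<bar>^3 * (mZ L e - qZ L e) + \<bar>u\<bar> * \<bar>mZ L e - ?K\<bar>
     + \<bar>u^2 * (mZ L e - qZ L e) - \<theta>^2\<bar> / 2" for e
  have bm[measurable]: "b J \<in> borel_measurable borel" for J unfolding b_def by measurable
  have binfm[measurable]: "binf \<in> borel_measurable borel" unfolding binf_def by measurable
  define w where "w = \<bar>u\<bar>^3 * (?K + 1) + \<bar>u\<bar> * (2 * ?K + 1) + (u^2 * (?K + 1) + \<theta>^2) / 2"
  have bb: "\<bar>b J e\<bar> \<le> w" for J e
  proof -
    have m0: "0 \<le> mT (TJ J) L e" "mT (TJ J) L e \<le> ?K + 1" using mT_ge0 mT_le[OF L0] by auto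
    have q0: "0 \<le> qT (TJ J) L e" "qT (TJ J) L e \<le> mT (TJ J) L e" using qT_ge0 qT_le_mT by auto
    have s: "0 \<le> mT (TJ J) L e - qT (TJ J) L e" "mT (TJ J) L e - qT (TJ J) L e \<le> ?K + 1" using m0 q0 by auto
    have t1: "\<bar>u\<bar>^3 * (mT (TJ J) L e - qT (TJ J) L e) \<le> \<bar>u\<bar>^3 * (?K + 1)"
      using s by (intro mult_left_mono) auto
    have t1': "0 \<le> \<bar>u\<bar>^3 * (mT (TJ J) L e - qT (TJ J) L e)" using s by simp
    have t2: "\<bar>u\<bar> * \<bar>mT (TJ J) L e - ?K\<bar> \<le> \<bar>u\<bar> * (2 * ?K + 1)"
      using m0 K0 by (intro mult_left_mono) auto
    have t3: "\<bar>u^2 * (mT (TJ J) L e - qT (TJ J) L e) - \<theta>^2\<bar> \<le> u^2 * (?K + 1) + \<theta>^2"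
    proof -
      have "0 \<le> u^2 * (mT (TJ J) L e - qT (TJ J) L e)" using s by simp
      moreover have "u^2 * (mT (TJ J) L e - qT (TJ J) L e) \<le> u^2 * (?K + 1)" using s by (intro mult_left_mono) auto
      moreover have "0 \<le> \<theta>^2" by simp
      ultimately show ?thesis unfolding abs_le_iff by (intro conjI) linarith+
    qed
    have "0 \<le> b J e" unfolding b_def using t1' by simp
    moreover have "b J e \<le> w"
    proof -
      have t3': "\<bar>u^2 * (mT (TJ J) L e - qT (TJ J) L e) - \<theta>^2\<bar> / 2 \<le> (u^2 * (?K + 1) + \<theta>^2) / 2"
        using t3 by (rule divide_right_mono) simp
      show ?thesis unfolding b_def w_def by (rule add_mono[OF add_mono[OF t1 t2] t3'])
    qed
    ultimately show ?thesis by simp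
  qed
  have normG: "cmod (G J) \<le> integral\<^sup>L U (b J)" for J
  proof -
    have "cmod (G J) \<le> integral\<^sup>L U (\<lambda>e. cmod (iexp (- (u * ?K)) * ?Phi J e - ?E))"
      unfolding G_def by (rule integral_norm_bound)
    also have "\<dots> \<le> integral\<^sup>L U (b J)"
    proof (rule integral_mono)
      show "integrable U (b J)" by (rule bounded_int_U[OF _ bb]) simp
      show "integrable U (\<lambda>e. cmod (iexp (- (u * ?K)) * ?Phi J e - ?E))"
      proof (rule UU.integrable_const_bound[where B=2])
        have "cmod (iexp (- (u * ?K)) * ?Phi J e - ?E) \<le> 2" for e
        proof -
          have "cmod (iexp (- (u * ?K)) * ?Phi J e) \<le> 1" using Phib by (simp add: norm_mult)
          moreover have "cmod ?E \<le> 1" by simp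
          ultimately show ?thesis using norm_triangle_ineq4[of "iexp (- (u * ?K)) * ?Phi J e" ?E] by linarith
        qed
        then show "AE e in U. norm (cmod (iexp (- (u * ?K)) * ?Phi J e - ?E)) \<le> 2" by simp
      qed simp
      fix e
      have "cmod (iexp (- (u * ?K)) * (\<Prod>j\<in>TJ J. 1 + pj L e j * (iexp u - 1)) - ?E)
        \<le> \<bar>u\<bar>^3 * (\<Sum>j\<in>TJ J. pj L e j * (1 - pj L e j)) + \<bar>u\<bar> * \<bar>(\<Sum>j\<in>TJ J. pj L e j) - ?K\<bar>
          + \<bar>u^2 * (\<Sum>j\<in>TJ J. pj L e j * (1 - pj L e j)) - \<theta>^2\<bar> / 2"
        by (rule pointwise_bound[OF finite_TJ pj_ge0 pj_le1 u])
      then show "cmod (iexp (- (u * ?K)) * ?Phi J e - ?E) \<le> b J e"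
        unfolding b_def sum_pq by (simp add: mT_def)
    qed
    finally show ?thesis .
  qed
  have blim: "(\<lambda>J. integral\<^sup>L U (b J)) \<longlonglongrightarrow> integral\<^sup>L U binf"
  proof (rule integral_dominated_convergence[where w="\<lambda>_. w"])
    show "AE e in U. (\<lambda>J. b J e) \<longlonglongrightarrow> binf e"
      unfolding b_def binf_def by (intro AE_I2 tendsto_intros mT_tendsto[OF L0] qT_tendsto[OF L0]) auto
    show "AE e in U. norm (b J e) \<le> w" for J using bb by simp
  qed auto
  have binfB: "binf e \<le> \<bar>u\<bar>^3 * (Vv + 5) + \<bar>u\<bar> + 5 * u^2 / 2" for e
  proof -
    have sV: "\<bar>(mZ L e - qZ L e) - Vv\<bar> \<le> 5" unfolding Vv_def by (rule sigma_V[OF L0])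
    have s0: "0 \<le> mZ L e - qZ L e" using qZ_le_mZ[OF L0] by simp
    have t1: "\<bar>u\<bar>^3 * (mZ L e - qZ L e) \<le> \<bar>u\<bar>^3 * (Vv + 5)" using sV by (intro mult_left_mono) auto
    have t2: "\<bar>u\<bar> * \<bar>mZ L e - ?K\<bar> \<le> \<bar>u\<bar> * 1"
      using mZ_bounds[OF L0, of e] by (intro mult_left_mono) auto
    have t3: "\<bar>u^2 * (mZ L e - qZ L e) - \<theta>^2\<bar> \<le> u^2 * 5"
    proof -
      have "\<bar>u^2 * (mZ L e - qZ L e) - \<theta>^2\<bar> = u^2 * \<bar>(mZ L e - qZ L e) - Vv\<bar>"
        unfolding th by (simp add: right_diff_distrib[symmetric] abs_mult)
      also have "\<dots> \<le> u^2 * 5" using sV by (intro mult_left_mono) auto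
      finally show ?thesis .
    qed
    show ?thesis unfolding binf_def using t1 t2 t3 by simp
  qed
  have "integral\<^sup>L U binf \<le> integral\<^sup>L U (\<lambda>_. \<bar>u\<bar>^3 * (Vv + 5) + \<bar>u\<bar> + 5 * u^2 / 2)"
  proof (rule integral_mono)
    show "integrable U binf"
    proof (rule bounded_int_U[where B="\<bar>u\<bar>^3 * (Vv + 5) + \<bar>u\<bar> + 5 * u^2 / 2"])
      fix e
      have "0 \<le> mZ L e - qZ L e" using qZ_le_mZ[OF L0] by simp
      then have "0 \<le> binf e" unfolding binf_def by simp
      then show "\<bar>binf e\<bar> \<le> \<bar>u\<bar>^3 * (Vv + 5) + \<bar>u\<bar> + 5 * u^2 / 2" using binfB[of e] by simp
    qed simp
  qed (use binfB in auto)
  then have intB: "integral\<^sup>L U binf \<le> \<bar>u\<bar>^3 * (Vv + 5) + \<bar>u\<bar> + 5 * u^2 / 2" by simp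
  have "cmod (char (distr M borel (\<lambda>\<omega>. (?N \<omega> - ?K) / sqrt Vv)) \<theta> - ?E) \<le> integral\<^sup>L U binf"
    using tendsto_norm[OF Glim] blim by (rule LIMSEQ_le) (use normG in auto)
  then show ?thesis using intB by simp
qed

end

context stbl
begin

lemma V_at_top:
  assumes Ls: "filterlim Ls at_top sequentially"
  shows "filterlim (\<lambda>n. number_variance M X \<epsilon> a t (Ls n)) at_top sequentially"
  unfolding filterlim_at_top
proof
  fix B :: real
  obtain L1 where L1: "0 \<le> L1" "B + 2 < Wf L1" using Wf_unbounded[of "B + 2"] by blast
  have "eventually (\<lambda>n. L1 \<le> Ls n) sequentially" using Ls unfolding filterlim_at_top by blast
  then show "eventually (\<lambda>n. B \<le> number_variance M X \<epsilon> a t (Ls n)) sequentially"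
  proof eventually_elim
    case (elim n)
    have "Wf L1 \<le> Wf (Ls n)" by (rule Wf_mono[OF L1(1) elim])
    moreover have "Wf (Ls n) - 2 \<le> number_variance M X \<epsilon> a t (Ls n)"
      using V_bounds(1)[of "Ls n"] L1(1) elim by simp
    ultimately show ?case using L1(2) by linarith
  qed
qed

theorem main:
  "\<forall>Ls :: nat \<Rightarrow> real. filterlim Ls at_top sequentially \<longrightarrow>
     weak_conv_m
       (\<lambda>n. distr M borel (\<lambda>\<omega>. (count_N X \<epsilon> a t (Ls n) \<omega> - Ls n / a)
                                  / sqrt (number_variance M X \<epsilon> a t (Ls n))))
       (density lborel std_normal_density)"
proof (intro allI impI)
  fix Ls :: "nat \<Rightarrow> real"
  assume Ls: "filterlim Ls at_top sequentially"
  define V where "V n = number_variance M X \<epsilon> a t (Ls n)" for n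
  have Vtop: "filterlim V at_top sequentially" unfolding V_def by (rule V_at_top[OF Ls])
  show "weak_conv_m (\<lambda>n. distr M borel (\<lambda>\<omega>. (count_N X \<epsilon> a t (Ls n) \<omega> - Ls n / a)
                                  / sqrt (number_variance M X \<epsilon> a t (Ls n))))
       (density lborel std_normal_density)"
  proof (rule levy_continuity)
    show "real_distribution (distr M borel (\<lambda>\<omega>. (count_N X \<epsilon> a t (Ls n) \<omega> - Ls n / a)
                                  / sqrt (number_variance M X \<epsilon> a t (Ls n))))" for n
      by (rule real_distribution_distr) measurable
    show "real_distribution (density lborel std_normal_density)" by (rule real_dist_normal_dist)
    fix \<theta> :: real
    let ?ch = "\<lambda>n. char (distr M borel (\<lambda>\<omega>. (count_N X \<epsilon> a t (Ls n) \<omega> - Ls n / a)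
                                  / sqrt (number_variance M X \<epsilon> a t (Ls n)))) \<theta>"
    let ?E = "complex_of_real (exp (- (\<theta>^2 / 2)))"
    define u where "u n = \<theta> / sqrt (V n)" for n
    have sq: "filterlim (\<lambda>n. sqrt (V n)) at_top sequentially"
      by (rule filterlim_compose[OF sqrt_at_top Vtop])
    have u0: "u \<longlonglongrightarrow> 0" unfolding u_def
      by (rule tendsto_divide_0[OF tendsto_const filterlim_at_top_imp_at_infinity[OF sq]])
    define C where "C n = 2 * \<bar>u n\<bar> * \<theta>^2 + \<bar>u n\<bar> + 5 * (u n)^2 / 2" for n
    have C0: "C \<longlonglongrightarrow> 0"
    proof -
      have "C \<longlonglongrightarrow> 2 * \<bar>0\<bar> * \<theta>^2 + \<bar>0\<bar> + 5 * 0^2 / 2"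
        unfolding C_def by (intro tendsto_intros u0) simp
      then show ?thesis by simp
    qed
    have e1: "eventually (\<lambda>n. 0 \<le> Ls n) sequentially" using Ls unfolding filterlim_at_top by blast
    have e2: "eventually (\<lambda>n. max 5 (\<theta>^2 + 1) \<le> V n) sequentially" using Vtop unfolding filterlim_at_top by blast
    have ev: "eventually (\<lambda>n. 0 \<le> Ls n \<and> max 5 (\<theta>^2 + 1) \<le> V n) sequentially"
      by (rule eventually_conj[OF e1 e2])
    have bound: "eventually (\<lambda>n. cmod (?ch n - ?E) \<le> C n) sequentially"
      using ev
    proof eventually_elim
      case (elim n)
      have L0: "0 \<le> Ls n" and V5: "5 \<le> V n" and Vt: "\<theta>^2 + 1 \<le> V n" using elim by auto
      have Vp: "0 < V n" using V5 by simp
      have "\<bar>\<theta>\<bar> \<le> sqrt (V n)"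
      proof -
        have "sqrt (\<theta>^2) \<le> sqrt (V n)" using Vt by (intro real_sqrt_le_mono) simp
        then show ?thesis by simp
      qed
      then have u1: "\<bar>u n\<bar> \<le> 1" unfolding u_def using Vp by (simp add: abs_div divide_le_eq_1)
      have est: "cmod (?ch n - ?E) \<le> \<bar>u n\<bar>^3 * (V n + 5) + \<bar>u n\<bar> + 5 * (u n)^2 / 2"
        using char_est[OF L0 Vp[unfolded V_def]] u1 unfolding u_def V_def by simp
      have "\<bar>u n\<bar>^3 * (V n + 5) \<le> \<bar>u n\<bar>^3 * (2 * V n)" using V5 by (intro mult_left_mono) auto
      also have "\<dots> = 2 * \<bar>u n\<bar> * ((u n)^2 * V n)" by (simp add: power2_eq_square power3_eq_cube)
      also have "(u n)^2 * V n = \<theta>^2" unfolding u_def using Vp by (simp add: power_divide)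
      finally have "\<bar>u n\<bar>^3 * (V n + 5) \<le> 2 * \<bar>u n\<bar> * \<theta>^2" .
      then show ?case using est unfolding C_def by linarith
    qed
    have "(\<lambda>n. cmod (?ch n - ?E)) \<longlonglongrightarrow> 0"
      by (rule tendsto_sandwich[OF _ bound tendsto_const C0]) simp
    then have "(\<lambda>n. ?ch n - ?E) \<longlonglongrightarrow> 0" by (rule tendsto_norm_zero_cancel)
    then have "(\<lambda>n. (?ch n - ?E) + ?E) \<longlonglongrightarrow> 0 + ?E" by (intro tendsto_intros)
    then show "(\<lambda>n. ?ch n) \<longlonglongrightarrow> char (density lborel std_normal_density) \<theta>"
      by (simp add: char_std_normal_distribution)
  qed
qed

end

theorem proposition2p1:
  fixes M :: "'a measure" and X :: "int \<Rightarrow> real \<Rightarrow> 'a \<Rightarrow> real" and \<epsilon> :: "'a \<Rightarrow> real"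
    and \<alpha> c a t :: real
  assumes "prob_space M"
    and "0 < \<alpha>" and "\<alpha> \<le> 1" and "0 < c" and "0 < a" and "0 < t"
    and "\<And>j. sym_stable_levy M (X j) \<alpha> c"
    and "\<epsilon> \<in> borel_measurable M"
    and "distr M borel \<epsilon> = uniform_measure lborel {0..1}"
    and "prob_space.indep_vars M (\<lambda>_. Pi\<^sub>M UNIV (\<lambda>_::real. borel))
           (\<lambda>i \<omega>. case i of None \<Rightarrow> (\<lambda>s. \<epsilon> \<omega>) | Some j \<Rightarrow> (\<lambda>s. X j s \<omega>)) (UNIV :: int option set)"
  shows "\<forall>Ls :: nat \<Rightarrow> real. filterlim Ls at_top sequentially \<longrightarrow>
           weak_conv_m
             (\<lambda>n. distr M borel (\<lambda>\<omega>. (count_N X \<epsilon> a t (Ls n) \<omega> - Ls n / a)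
                                        / sqrt (number_variance M X \<epsilon> a t (Ls n))))
             (density lborel std_normal_density)"
  proof -
  interpret stbl M X \<epsilon> \<alpha> c a t
    using assms by (simp add: stbl_def)
  show ?thesis by (rule main)
qed

end
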